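(* Let $u_{x,y}$ and $v_{x,y}$ be matrices of generalized kernels and put $\hat u_{x,y}=u_{x,y}+v_{x,y}$. Assume both $u$ and $\hat u$ are quasidefinite, and denote by $P^{[i]}_n,H_n,K_n$ the objects associated with $u$ and by $\hat P^{[i]}_n,\hat H_n$ those associated with $\hat u$. Then for every $n\ge0$ (with $K_{-1}:=0$) and every $z$, $$\hat P^{[1]}_n(z)=P^{[1]}_n(z)-\big\langle \hat P^{[1]}_n(x),(K_{n-1}(z,y))^\top\big\rangle_v,\qquad (\hat P^{[2]}_n(z))^\top=(P^{[2]}_n(z))^\top-\big\langle K_{n-1}(x,z),\hat P^{[2]}_n(y)\big\rangle_v,$$ and $$\hat H_n=H_n+\langle \hat P^{[1]}_n(x),P^{[2]}_n(y)\rangle_v=H_n+\langle P^{[1]}_n(x),\hat P^{[2]}_n(y)\rangle_v .$$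
   Context: Fix an integer $p\ge1$; ${}^\top$ denotes transpose. A matrix of generalized kernels $w_{x,y}$ is a $p\times p$ matrix of continuous linear functionals on $\mathbb C[x,y]$, defining the sesquilinear form $\langle P(x),Q(y)\rangle_w\in\mathbb C^{p\times p}$ for $P,Q\in\mathbb C^{p\times p}[x]$ with entries $(\langle P,Q\rangle_w)_{i,j}=\sum_{k,l=1}^p\langle (w_{x,y})_{k,l},P_{i,k}(x)Q_{j,l}(y)\rangle$; it is left-linear in the first argument and satisfies $\langle P,AQ\rangle_w=\langle P,Q\rangle_wA^\top$; forms add: $\langle\cdot,\cdot\rangle_{u+v}=\langle\cdot,\cdot\rangle_u+\langle\cdot,\cdot\rangle_v$. When an argument depends polynomially on an extra parameter $z$, the form is applied with $z$ fixed. Gram matrix $G_{k,l}=\langle I_px^k,I_py^l\rangle_w$; $w$ is quasidefinite if all leading block truncations $(G_{i,j})_{0\le i,j\le k-1}$ are nonsingular. Then $G=S_1^{-1}HS_2^{-\top}$ uniquely with $S_1,S_2$ block lower unitriangular and $H=\operatorname{diag}(H_0,H_1,\dots)$; the monic matrix polynomials $P^{[i]}_n(x)=\sum_{k=0}^n(S_i)_{n,k}x^k$ satisfy $\langle P^{[1]}_n(x),P^{[2]}_m(y)\rangle_w=\delta_{n,m}H_n$. The Christoffel--Darboux kernel is $K_n(x,y)=\sum_{k=0}^n(P^{[2]}_k(y))^\top H_k^{-1}P^{[1]}_k(x)$. *)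

theory Defs
  imports "HOL-Computational_Algebra.Polynomial" "Jordan_Normal_Form.Gauss_Jordan_Elimination"
    "Jordan_Normal_Form.Determinant"
begin

text \<open>A generalized kernel (linear functional on C[x,y]) is represented by its
  moments: mom a b = value of the functional on x^a y^b.\<close>
type_synonym kernel = "nat \<Rightarrow> nat \<Rightarrow> complex"

definition kpair :: "kernel \<Rightarrow> complex poly \<Rightarrow> complex poly \<Rightarrow> complex" where
  "kpair w f g = (\<Sum>a\<le>degree f. \<Sum>b\<le>degree g. coeff f a * coeff g b * w a b)"

text \<open>Sesquilinear form for a p x p matrix of kernels W; P is a matrix polynomial
  in x (entries P_{i,k}), Q a matrix polynomial in y.\<close>
definition mform :: "nat \<Rightarrow> kernel mat \<Rightarrow> complex poly mat \<Rightarrow> complex poly mat \<Rightarrow> complex mat" where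
  "mform p W P Q = mat p p (\<lambda>(i,j). \<Sum>k<p. \<Sum>l<p. kpair (W $$ (k,l)) (P $$ (i,k)) (Q $$ (j,l)))"

definition kadd :: "nat \<Rightarrow> kernel mat \<Rightarrow> kernel mat \<Rightarrow> kernel mat" where
  "kadd p u v = mat p p (\<lambda>(k,l). \<lambda>a b. (u $$ (k,l)) a b + (v $$ (k,l)) a b)"

definition Ixk :: "nat \<Rightarrow> nat \<Rightarrow> complex poly mat" where
  "Ixk p k = mat p p (\<lambda>(i,j). if i = j then monom 1 k else 0)"

definition gram :: "nat \<Rightarrow> kernel mat \<Rightarrow> nat \<Rightarrow> nat \<Rightarrow> complex mat" where
  "gram p W k l = mform p W (Ixk p k) (Ixk p l)"

definition gram_trunc :: "nat \<Rightarrow> kernel mat \<Rightarrow> nat \<Rightarrow> complex mat" where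
  "gram_trunc p W k = mat (k*p) (k*p) (\<lambda>(a,b). gram p W (a div p) (b div p) $$ (a mod p, b mod p))"

definition quasidefinite :: "nat \<Rightarrow> kernel mat \<Rightarrow> bool" where
  "quasidefinite p W \<longleftrightarrow> (\<forall>k\<ge>1. det (gram_trunc p W k) \<noteq> 0)"

definition msum :: "nat \<Rightarrow> ('b \<Rightarrow> 'a::comm_monoid_add mat) \<Rightarrow> 'b set \<Rightarrow> 'a mat" where
  "msum p f A = mat p p (\<lambda>(i,j). \<Sum>a\<in>A. f a $$ (i,j))"

text \<open>Block Gauss factorization G = S1^{-1} H S2^{-T}, written equivalently as
  S1 G S2^T = H (S1, S2 block lower unitriangular, H block diagonal).\<close>
definition gauss_fact :: "nat \<Rightarrow> kernel mat \<Rightarrow> (nat \<Rightarrow> nat \<Rightarrow> complex mat) \<Rightarrow>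
    (nat \<Rightarrow> complex mat) \<Rightarrow> (nat \<Rightarrow> nat \<Rightarrow> complex mat) \<Rightarrow> bool" where
  "gauss_fact p W S1 H S2 \<longleftrightarrow>
     (\<forall>n k. S1 n k \<in> carrier_mat p p \<and> S2 n k \<in> carrier_mat p p) \<and>
     (\<forall>n. H n \<in> carrier_mat p p) \<and>
     (\<forall>n. S1 n n = 1\<^sub>m p \<and> S2 n n = 1\<^sub>m p) \<and>
     (\<forall>n k. n < k \<longrightarrow> S1 n k = 0\<^sub>m p p \<and> S2 n k = 0\<^sub>m p p) \<and>
     (\<forall>n m. msum p (\<lambda>(k,l). S1 n k * gram p W k l * transpose_mat (S2 m l)) ({..n} \<times> {..m})
            = (if n = m then H n else 0\<^sub>m p p))"

definition gfact :: "nat \<Rightarrow> kernel mat \<Rightarrow>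
    (nat \<Rightarrow> nat \<Rightarrow> complex mat) \<times> (nat \<Rightarrow> complex mat) \<times> (nat \<Rightarrow> nat \<Rightarrow> complex mat)" where
  "gfact p W = (THE (S1,H,S2). gauss_fact p W S1 H S2)"

definition S1 where "S1 p W = fst (gfact p W)"
definition Hn where "Hn p W = fst (snd (gfact p W))"
definition S2 where "S2 p W = snd (snd (gfact p W))"

definition mpoly_of :: "nat \<Rightarrow> (nat \<Rightarrow> nat \<Rightarrow> complex mat) \<Rightarrow> nat \<Rightarrow> complex poly mat" where
  "mpoly_of p S n = mat p p (\<lambda>(i,j). \<Sum>k\<le>n. monom (S n k $$ (i,j)) k)"

definition P1 :: "nat \<Rightarrow> kernel mat \<Rightarrow> nat \<Rightarrow> complex poly mat" where
  "P1 p W n = mpoly_of p (S1 p W) n"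
definition P2 :: "nat \<Rightarrow> kernel mat \<Rightarrow> nat \<Rightarrow> complex poly mat" where
  "P2 p W n = mpoly_of p (S2 p W) n"

definition meval :: "complex poly mat \<Rightarrow> complex \<Rightarrow> complex mat" where
  "meval P z = map_mat (\<lambda>f. poly f z) P"

definition mconst :: "complex mat \<Rightarrow> complex poly mat" where
  "mconst A = map_mat (\<lambda>c. [:c:]) A"

definition minv :: "complex mat \<Rightarrow> complex mat" where
  "minv A = the (mat_inverse A)"

text \<open>K_{n-1}(z,y) for fixed z, as a matrix polynomial in y (K_{-1} = 0):
  sum_{k<n} (P2_k(y))^T H_k^{-1} P1_k(z).\<close>
definition Kprev_zy :: "nat \<Rightarrow> kernel mat \<Rightarrow> nat \<Rightarrow> complex \<Rightarrow> complex poly mat" where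
  "Kprev_zy p W n z = msum p (\<lambda>k. transpose_mat (P2 p W k) * mconst (minv (Hn p W k) * meval (P1 p W k) z)) {..<n}"

text \<open>K_{n-1}(x,z) for fixed z, as a matrix polynomial in x (K_{-1} = 0):
  sum_{k<n} (P2_k(z))^T H_k^{-1} P1_k(x).\<close>
definition Kprev_xz :: "nat \<Rightarrow> kernel mat \<Rightarrow> nat \<Rightarrow> complex \<Rightarrow> complex poly mat" where
  "Kprev_xz p W n z = msum p (\<lambda>k. mconst (transpose_mat (meval (P2 p W k) z) * minv (Hn p W k)) * P1 p W k) {..<n}"

end

theory Submission
  imports Defs
begin

lemma sq_mult_one_r[simp]: "(A :: 'a :: comm_ring_1 mat) \<in> carrier_mat p p \<Longrightarrow> A * 1\<^sub>m p = A" by simp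
lemma sq_mult_one_l[simp]: "(A :: 'a :: comm_ring_1 mat) \<in> carrier_mat p p \<Longrightarrow> 1\<^sub>m p * A = A" by simp
lemma sq_mult_zero_r[simp]: "(A :: 'a :: comm_ring_1 mat) \<in> carrier_mat p p \<Longrightarrow> A * 0\<^sub>m p p = 0\<^sub>m p p" by simp
lemma sq_mult_zero_l[simp]: "(A :: 'a :: comm_ring_1 mat) \<in> carrier_mat p p \<Longrightarrow> 0\<^sub>m p p * A = 0\<^sub>m p p" by simp
lemma sq_mult_carrier[simp]: "(A :: 'a :: comm_ring_1 mat) \<in> carrier_mat p p \<Longrightarrow> B \<in> carrier_mat p p \<Longrightarrow> A * B \<in> carrier_mat p p" by simp
lemma sq_add_carrier[simp]: "(A :: 'a :: comm_ring_1 mat) \<in> carrier_mat p p \<Longrightarrow> B \<in> carrier_mat p p \<Longrightarrow> A + B \<in> carrier_mat p p" by simp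
lemma sq_minus_carrier[simp]: "(A :: 'a :: comm_ring_1 mat) \<in> carrier_mat p p \<Longrightarrow> B \<in> carrier_mat p p \<Longrightarrow> A - B \<in> carrier_mat p p" by (rule minus_carrier_mat)
lemma sq_transpose_carrier[simp]: "(A :: 'a :: comm_ring_1 mat) \<in> carrier_mat p p \<Longrightarrow> transpose_mat A \<in> carrier_mat p p" by simp
lemma sq_uminus_carrier[simp]: "(A :: 'a :: comm_ring_1 mat) \<in> carrier_mat p p \<Longrightarrow> - A \<in> carrier_mat p p" by simp
lemma sq_add_zero_l[simp]: "(A :: 'a :: comm_ring_1 mat) \<in> carrier_mat p p \<Longrightarrow> 0\<^sub>m p p + A = A" by simp
lemma sq_add_zero_r[simp]: "(A :: 'a :: comm_ring_1 mat) \<in> carrier_mat p p \<Longrightarrow> A + 0\<^sub>m p p = A" by simp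

lemma msum_carrier[simp]: "msum p f A \<in> carrier_mat p p"
  by (simp add: msum_def)

lemma msum_index[simp]: "i < p \<Longrightarrow> j < p \<Longrightarrow> msum p f A $$ (i,j) = (\<Sum>a\<in>A. f a $$ (i,j))"
  by (simp add: msum_def)

lemma msum_dims[simp]: "dim_row (msum p f A) = p" "dim_col (msum p f A) = p"
  by (simp_all add: msum_def)

lemma mult_entry:
  assumes "A \<in> carrier_mat p p" "B \<in> carrier_mat p p" "i < p" "j < p"
  shows "(A * B) $$ (i,j) = (\<Sum>k<p. A $$ (i,k) * B $$ (k,j))"
  using assms by (auto simp: scalar_prod_def lessThan_atLeast0 intro!: sum.cong)

lemma msum_mult_left:
  assumes "X \<in> carrier_mat p p" "\<And>a. a \<in> A \<Longrightarrow> f a \<in> carrier_mat p p"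
  shows "X * msum p f A = msum p (\<lambda>a. X * f a) A"
proof (rule eq_matI)
  fix i j assume ij: "i < dim_row (msum p (\<lambda>a. X * f a) A)" "j < dim_col (msum p (\<lambda>a. X * f a) A)"
  hence "(X * msum p f A) $$ (i,j) = (\<Sum>k<p. X $$ (i,k) * (\<Sum>a\<in>A. f a $$ (k,j)))"
    using assms by (simp del: index_mult_mat add: mult_entry)
  also have "\<dots> = (\<Sum>a\<in>A. \<Sum>k<p. X $$ (i,k) * f a $$ (k,j))"
    by (simp add: sum_distrib_left sum.swap[of _ "{..<p}"])
  also have "\<dots> = (\<Sum>a\<in>A. (X * f a) $$ (i,j))"
    apply (intro sum.cong refl) subgoal for a using assms(1) assms(2)[of a] ij by (subst mult_entry[where p=p]) auto done
  finally show "(X * msum p f A) $$ (i,j) = msum p (\<lambda>a. X * f a) A $$ (i,j)" using ij by simp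
qed (use assms in auto)

lemma msum_mult_right:
  assumes "X \<in> carrier_mat p p" "\<And>a. a \<in> A \<Longrightarrow> f a \<in> carrier_mat p p"
  shows "msum p f A * X = msum p (\<lambda>a. f a * X) A"
proof (rule eq_matI)
  fix i j assume ij: "i < dim_row (msum p (\<lambda>a. f a * X) A)" "j < dim_col (msum p (\<lambda>a. f a * X) A)"
  hence "(msum p f A * X) $$ (i,j) = (\<Sum>k<p. (\<Sum>a\<in>A. f a $$ (i,k)) * X $$ (k,j))"
    using assms by (subst mult_entry[where p=p]) auto
  also have "\<dots> = (\<Sum>a\<in>A. \<Sum>k<p. f a $$ (i,k) * X $$ (k,j))"
    by (simp add: sum_distrib_right sum.swap[of _ "{..<p}"])
  also have "\<dots> = (\<Sum>a\<in>A. (f a * X) $$ (i,j))"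
    apply (intro sum.cong refl) subgoal for a using assms(1) assms(2)[of a] ij by (subst mult_entry[where p=p]) auto done
  finally show "(msum p f A * X) $$ (i,j) = msum p (\<lambda>a. f a * X) A $$ (i,j)" using ij by simp
qed (use assms in auto)

lemma msum_add:
  assumes "\<And>a. a \<in> A \<Longrightarrow> f a \<in> carrier_mat p p" "\<And>a. a \<in> A \<Longrightarrow> g a \<in> carrier_mat p p"
  shows "msum p (\<lambda>a. f a + g a) A = msum p f A + msum p g A"
proof (rule eq_matI)
  fix i j assume ij: "i < dim_row (msum p f A + msum p g A)" "j < dim_col (msum p f A + msum p g A)"
  have "msum p (\<lambda>a. f a + g a) A $$ (i,j) = (\<Sum>a\<in>A. f a $$ (i,j) + g a $$ (i,j))"
    using ij apply simp
    apply (intro sum.cong refl) subgoal for a using assms(1)[of a] assms(2)[of a] ij by auto done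
  also have "\<dots> = (msum p f A + msum p g A) $$ (i,j)" using ij by (simp add: sum.distrib)
  finally show "msum p (\<lambda>a. f a + g a) A $$ (i,j) = (msum p f A + msum p g A) $$ (i,j)" .
qed auto

lemma msum_diff:
  fixes f g :: "'b \<Rightarrow> 'a::ab_group_add mat"
  assumes "\<And>a. a \<in> A \<Longrightarrow> f a \<in> carrier_mat p p" "\<And>a. a \<in> A \<Longrightarrow> g a \<in> carrier_mat p p"
  shows "msum p (\<lambda>a. f a - g a) A = msum p f A - msum p g A"
proof (rule eq_matI)
  fix i j assume ij: "i < dim_row (msum p f A - msum p g A)" "j < dim_col (msum p f A - msum p g A)"
  have "msum p (\<lambda>a. f a - g a) A $$ (i,j) = (\<Sum>a\<in>A. f a $$ (i,j) - g a $$ (i,j))"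
    using ij apply simp
    apply (intro sum.cong refl) subgoal for a using assms(1)[of a] assms(2)[of a] ij by auto done
  also have "\<dots> = (msum p f A - msum p g A) $$ (i,j)" using ij by (simp add: sum_subtractf)
  finally show "msum p (\<lambda>a. f a - g a) A $$ (i,j) = (msum p f A - msum p g A) $$ (i,j)" .
qed auto

lemma msum_cong:
  assumes "\<And>a. a \<in> A \<Longrightarrow> f a = g a"
  shows "msum p f A = msum p g A"
  using assms by (auto simp: msum_def intro!: sum.cong)

lemma msum_Sigma:
  assumes "finite A" "finite B"
  shows "msum p f (A \<times> B) = msum p (\<lambda>a. msum p (\<lambda>b. f (a,b)) B) A"
  apply (rule eq_matI)
  using assms by (auto simp: sum.cartesian_product)

lemma msum_Sigma':
  assumes "finite A" "finite B"
  shows "msum p f (A \<times> B) = msum p (\<lambda>b. msum p (\<lambda>a. f (a,b)) A) B"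
  unfolding msum_Sigma[OF assms]
  apply (rule eq_matI)
  using assms by (auto intro: sum.swap)

lemma msum_zero:
  assumes "\<And>a. a \<in> A \<Longrightarrow> f a = 0\<^sub>m p p"
  shows "msum p f A = 0\<^sub>m p p"
  apply (rule eq_matI)
  using assms by auto

lemma msum_insert:
  assumes "finite A" "x \<notin> A" "f x \<in> carrier_mat p p"
  shows "msum p f (insert x A) = f x + msum p f A"
  apply (rule eq_matI)
  using assms by auto

lemma msum_atMost:
  fixes n :: nat
  assumes "f n \<in> carrier_mat p p"
  shows "msum p f {..n} = msum p f {..<n} + f n"
proof -
  have e: "{..n} = insert n {..<n}" by (auto simp: order.order_iff_strict)
  show ?thesis using assms unfolding e by (simp add: msum_insert comm_add_mat[of _ p p])
qed

lemma msum_single: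
  assumes "finite A" "k \<in> A" "f k \<in> carrier_mat p p" "\<And>a. a \<in> A \<Longrightarrow> a \<noteq> k \<Longrightarrow> f a = 0\<^sub>m p p"
  shows "msum p f A = f k"
proof (rule eq_matI)
  fix i j assume ij: "i < dim_row (f k)" "j < dim_col (f k)"
  hence "(\<Sum>a\<in>A. f a $$ (i,j)) = f k $$ (i,j)"
    using assms by (subst sum.remove[of _ k]) (auto intro!: sum.neutral)
  thus "msum p f A $$ (i,j) = f k $$ (i,j)" using ij assms by auto
qed (use assms in auto)

lemma transpose_msum: assumes "\<And>a. a \<in> A \<Longrightarrow> f a \<in> carrier_mat p p"
  shows "transpose_mat (msum p f A) = msum p (\<lambda>a. transpose_mat (f a)) A"
  apply (rule eq_matI) apply simp_all
  apply (intro sum.cong refl) subgoal for i j a using assms[of a] by auto done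

lemma sum_lessThan_ext:
  fixes h :: "nat \<Rightarrow> 'a::comm_monoid_add"
  assumes "\<And>a. a \<ge> N \<Longrightarrow> h a = 0" "\<And>a. a \<ge> N' \<Longrightarrow> h a = 0"
  shows "sum h {..<N} = sum h {..<N'}"
proof (cases "N \<le> N'")
  case True
  thus ?thesis using assms(1) by (intro sum.mono_neutral_left) auto
next
  case False
  thus ?thesis using assms(2) by (intro sum.mono_neutral_right) auto
qed

lemma kpair_ext:
  assumes "\<And>a. a \<ge> N \<Longrightarrow> coeff f a = 0" "\<And>b. b \<ge> M \<Longrightarrow> coeff g b = 0"
  shows "kpair w f g = (\<Sum>a<N. \<Sum>b<M. coeff f a * coeff g b * w a b)"
proof -
  have "kpair w f g = (\<Sum>a<Suc (degree f). \<Sum>b<Suc (degree g). coeff f a * coeff g b * w a b)"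
    unfolding kpair_def lessThan_Suc_atMost ..
  also have "\<dots> = (\<Sum>a<N. \<Sum>b<Suc (degree g). coeff f a * coeff g b * w a b)"
    by (rule sum_lessThan_ext) (auto simp: coeff_eq_0 assms(1))
  also have "\<dots> = (\<Sum>a<N. \<Sum>b<M. coeff f a * coeff g b * w a b)"
    by (intro sum.cong refl sum_lessThan_ext) (auto simp: coeff_eq_0 assms(2))
  finally show ?thesis .
qed

lemma kpair_big:
  assumes "N > degree f" "M > degree g"
  shows "kpair w f g = (\<Sum>a<N. \<Sum>b<M. coeff f a * coeff g b * w a b)"
  using assms by (intro kpair_ext) (auto simp: coeff_eq_0)

lemma kpair_add_left: "kpair w (f + g) h = kpair w f h + kpair w g h"
proof -
  define N where "N = Suc (degree f + degree g + degree (f+g))"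
  define M where "M = Suc (degree h)"
  have "kpair w (f + g) h = (\<Sum>a<N. \<Sum>b<M. coeff (f+g) a * coeff h b * w a b)"
    by (rule kpair_big) (auto simp: N_def M_def)
  also have "\<dots> = (\<Sum>a<N. \<Sum>b<M. coeff f a * coeff h b * w a b) + (\<Sum>a<N. \<Sum>b<M. coeff g a * coeff h b * w a b)"
    by (simp add: algebra_simps sum.distrib)
  also have "\<dots> = kpair w f h + kpair w g h"
    by (subst (1 2) kpair_big[where N=N and M=M]) (auto simp: N_def M_def)
  finally show ?thesis .
qed

lemma kpair_add_right: "kpair w h (f + g) = kpair w h f + kpair w h g"
proof -
  define N where "N = Suc (degree f + degree g + degree (f+g))"
  define M where "M = Suc (degree h)"
  have "kpair w h (f + g) = (\<Sum>a<M. \<Sum>b<N. coeff h a * coeff (f+g) b * w a b)"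
    by (rule kpair_big) (auto simp: N_def M_def)
  also have "\<dots> = (\<Sum>a<M. \<Sum>b<N. coeff h a * coeff f b * w a b) + (\<Sum>a<M. \<Sum>b<N. coeff h a * coeff g b * w a b)"
    by (simp add: algebra_simps sum.distrib)
  also have "\<dots> = kpair w h f + kpair w h g"
    by (subst (1 2) kpair_big[where N=M and M=N]) (auto simp: N_def M_def)
  finally show ?thesis .
qed

lemma kpair_zero_left[simp]: "kpair w 0 h = 0" by (simp add: kpair_def)
lemma kpair_zero_right[simp]: "kpair w h 0 = 0" by (simp add: kpair_def)

lemma kpair_smult_left: "kpair w (smult c f) h = c * kpair w f h"
proof -
  define N where "N = Suc (degree f)"
  define M where "M = Suc (degree h)"
  have "kpair w (smult c f) h = (\<Sum>a<N. \<Sum>b<M. coeff (smult c f) a * coeff h b * w a b)"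
    by (rule kpair_big) (auto simp: N_def M_def intro: le_less_trans[OF degree_smult_le])
  also have "\<dots> = c * (\<Sum>a<N. \<Sum>b<M. coeff f a * coeff h b * w a b)"
    by (simp add: algebra_simps sum_distrib_left)
  also have "\<dots> = c * kpair w f h"
    by (subst kpair_big[where N=N and M=M]) (auto simp: N_def M_def)
  finally show ?thesis .
qed

lemma kpair_smult_right: "kpair w h (smult c f) = c * kpair w h f"
proof -
  define N where "N = Suc (degree f)"
  define M where "M = Suc (degree h)"
  have "kpair w h (smult c f) = (\<Sum>a<M. \<Sum>b<N. coeff h a * coeff (smult c f) b * w a b)"
    by (rule kpair_big) (auto simp: N_def M_def intro: le_less_trans[OF degree_smult_le])
  also have "\<dots> = c * (\<Sum>a<M. \<Sum>b<N. coeff h a * coeff f b * w a b)"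
    by (simp add: algebra_simps sum_distrib_left)
  also have "\<dots> = c * kpair w h f"
    by (subst kpair_big[where N=M and M=N]) (auto simp: N_def M_def)
  finally show ?thesis .
qed

lemma kpair_sum_left: "kpair w (\<Sum>r\<in>R. f r) h = (\<Sum>r\<in>R. kpair w (f r) h)"
  by (induction R rule: infinite_finite_induct) (auto simp: kpair_add_left)

lemma kpair_sum_right: "kpair w h (\<Sum>r\<in>R. f r) = (\<Sum>r\<in>R. kpair w h (f r))"
  by (induction R rule: infinite_finite_induct) (auto simp: kpair_add_right)

lemma kpair_diff_left: "kpair w (f - g) h = kpair w f h - kpair w g h"
  using kpair_add_left[of w "f - g" g h] by simp

lemma kpair_diff_right: "kpair w h (f - g) = kpair w h f - kpair w h g"
  using kpair_add_right[of w h "f - g" g] by simp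

lemma kpair_monom: "kpair w (monom 1 a) (monom 1 b) = w a b"
  by (subst kpair_big[where N="Suc a" and M="Suc b"]) (auto simp: degree_monom_eq coeff_monom if_distrib cong: if_cong)

definition mcoeff :: "nat \<Rightarrow> complex poly mat \<Rightarrow> nat \<Rightarrow> complex mat" where
  "mcoeff p P a = mat p p (\<lambda>(i,j). coeff (P $$ (i,j)) a)"

lemma mcoeff_carrier[simp]: "mcoeff p P a \<in> carrier_mat p p" by (simp add: mcoeff_def)
lemma mcoeff_dims[simp]: "dim_row (mcoeff p P a) = p" "dim_col (mcoeff p P a) = p" by (simp_all add: mcoeff_def)
lemma mcoeff_index[simp]: "i < p \<Longrightarrow> j < p \<Longrightarrow> mcoeff p P a $$ (i,j) = coeff (P $$ (i,j)) a"
  by (simp add: mcoeff_def)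

lemma mform_carrier[simp]: "mform p W P Q \<in> carrier_mat p p" by (simp add: mform_def)
lemma mform_dims[simp]: "dim_row (mform p W P Q) = p" "dim_col (mform p W P Q) = p" by (simp_all add: mform_def)
lemma mform_index: "i < p \<Longrightarrow> j < p \<Longrightarrow> mform p W P Q $$ (i,j) =
   (\<Sum>k<p. \<Sum>l<p. kpair (W $$ (k,l)) (P $$ (i,k)) (Q $$ (j,l)))"
  by (simp add: mform_def)

lemma gram_carrier[simp]: "gram p W a b \<in> carrier_mat p p" by (simp add: gram_def)

lemma gram_entry:
  assumes "k < p" "l < p"
  shows "gram p W a b $$ (k,l) = (W $$ (k,l)) a b"
proof -
  have "gram p W a b $$ (k,l) = (\<Sum>k'<p. \<Sum>l'<p. kpair (W $$ (k',l'))
         (if k = k' then monom 1 a else 0) (if l = l' then monom 1 b else 0))"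
    using assms by (simp add: gram_def mform_index Ixk_def)
  also have "\<dots> = (\<Sum>k'<p. if k' = k then kpair (W $$ (k',l)) (monom 1 a) (monom 1 b) else 0)"
    using assms by (intro sum.cong refl) (auto simp: if_distrib cong: if_cong)
  also have "\<dots> = (W $$ (k,l)) a b" using assms by (simp add: kpair_monom)
  finally show ?thesis .
qed

lemma kadd_index: "k < p \<Longrightarrow> l < p \<Longrightarrow> kadd p u v $$ (k,l) = (\<lambda>a b. (u $$ (k,l)) a b + (v $$ (k,l)) a b)"
  by (simp add: kadd_def)

lemma kpair_fun_add: "kpair (\<lambda>a b. w a b + w' a b) f g = kpair w f g + kpair w' f g"
  by (simp add: kpair_def algebra_simps sum.distrib)

lemma mform_kadd: "mform p (kadd p u v) P Q = mform p u P Q + mform p v P Q"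
  by (rule eq_matI) (auto simp: mform_index kadd_index kpair_fun_add sum.distrib)

lemma gram_kadd: "gram p (kadd p u v) a b = gram p u a b + gram p v a b"
  by (simp add: gram_def mform_kadd)

lemma triple_entry:
  assumes "A \<in> carrier_mat p p" "B \<in> carrier_mat p p" "C \<in> carrier_mat p p" "i < p" "j < p"
  shows "(A * B * C) $$ (i,j) = (\<Sum>l<p. \<Sum>k<p. A $$ (i,k) * B $$ (k,l) * C $$ (l,j))"
proof -
  have AB: "A * B \<in> carrier_mat p p" using assms by auto
  have 1: "(A * B * C) $$ (i,j) = (\<Sum>l<p. (A * B) $$ (i,l) * C $$ (l,j))"
    by (rule mult_entry[OF AB assms(3-5)])
  have 2: "(A * B) $$ (i,l) = (\<Sum>k<p. A $$ (i,k) * B $$ (k,l))" if "l < p" for l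
    by (rule mult_entry[OF assms(1,2,4) that])
  show ?thesis unfolding 1 by (intro sum.cong refl) (simp add: 2 sum_distrib_right)
qed

lemma mform_coeff:
  assumes P: "P \<in> carrier_mat p p" and Q: "Q \<in> carrier_mat p p"
    and cP: "\<And>i j a. i < p \<Longrightarrow> j < p \<Longrightarrow> a \<ge> N \<Longrightarrow> coeff (P $$ (i,j)) a = 0"
    and cQ: "\<And>i j b. i < p \<Longrightarrow> j < p \<Longrightarrow> b \<ge> M \<Longrightarrow> coeff (Q $$ (i,j)) b = 0"
  shows "mform p W P Q = msum p (\<lambda>(a,b). mcoeff p P a * gram p W a b * transpose_mat (mcoeff p Q b))
            ({..<N} \<times> {..<M})"
proof (rule eq_matI)
  fix i j assume "i < dim_row (msum p (\<lambda>(a,b). mcoeff p P a * gram p W a b * transpose_mat (mcoeff p Q b))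
            ({..<N} \<times> {..<M}))" "j < dim_col (msum p (\<lambda>(a,b). mcoeff p P a * gram p W a b * transpose_mat (mcoeff p Q b))
            ({..<N} \<times> {..<M}))"
  hence ij: "i < p" "j < p" by auto
  have "mform p W P Q $$ (i,j) = (\<Sum>k<p. \<Sum>l<p. \<Sum>a<N. \<Sum>b<M.
      coeff (P $$ (i,k)) a * coeff (Q $$ (j,l)) b * (W $$ (k,l)) a b)"
    using ij by (simp add: mform_index, intro sum.cong refl kpair_ext) (auto intro: cP cQ)
  also have "\<dots> = (\<Sum>k<p. \<Sum>a<N. \<Sum>l<p. \<Sum>b<M.
      coeff (P $$ (i,k)) a * coeff (Q $$ (j,l)) b * (W $$ (k,l)) a b)"
    by (rule sum.cong[OF refl], rule sum.swap)
  also have "\<dots> = (\<Sum>a<N. \<Sum>k<p. \<Sum>l<p. \<Sum>b<M.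
      coeff (P $$ (i,k)) a * coeff (Q $$ (j,l)) b * (W $$ (k,l)) a b)"
    by (rule sum.swap)
  also have "\<dots> = (\<Sum>a<N. \<Sum>k<p. \<Sum>b<M. \<Sum>l<p.
      coeff (P $$ (i,k)) a * coeff (Q $$ (j,l)) b * (W $$ (k,l)) a b)"
    by (rule sum.cong[OF refl], rule sum.cong[OF refl], rule sum.swap)
  also have "\<dots> = (\<Sum>a<N. \<Sum>b<M. \<Sum>k<p. \<Sum>l<p.
      coeff (P $$ (i,k)) a * coeff (Q $$ (j,l)) b * (W $$ (k,l)) a b)"
    by (rule sum.cong[OF refl], rule sum.swap)
  also have "\<dots> = (\<Sum>a<N. \<Sum>b<M. \<Sum>l<p. \<Sum>k<p.
      coeff (P $$ (i,k)) a * coeff (Q $$ (j,l)) b * (W $$ (k,l)) a b)"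
    by (rule sum.cong[OF refl], rule sum.cong[OF refl], rule sum.swap)
  also have "\<dots> = (\<Sum>x\<in>{..<N} \<times> {..<M}.
       (case x of (a,b) \<Rightarrow> mcoeff p P a * gram p W a b * transpose_mat (mcoeff p Q b)) $$ (i,j))"
    apply (subst sum.cartesian_product[where A="{..<N}" and B="{..<M}"])
    using ij by (intro sum.cong refl) (clarsimp simp del: index_mult_mat simp add: triple_entry[where p=p] gram_entry
       algebra_simps)
  finally show "mform p W P Q $$ (i,j) = msum p (\<lambda>(a,b). mcoeff p P a * gram p W a b * transpose_mat (mcoeff p Q b))
            ({..<N} \<times> {..<M}) $$ (i,j)" unfolding msum_index[OF ij] .
qed auto

lemma mpoly_of_carrier[simp]: "mpoly_of p S n \<in> carrier_mat p p" by (simp add: mpoly_of_def)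
lemma mpoly_of_index: "i < p \<Longrightarrow> j < p \<Longrightarrow> mpoly_of p S n $$ (i,j) = (\<Sum>k\<le>n. monom (S n k $$ (i,j)) k)"
  by (simp add: mpoly_of_def)

lemma coeff_mpoly_of: "i < p \<Longrightarrow> j < p \<Longrightarrow> coeff (mpoly_of p S n $$ (i,j)) a = (if a \<le> n then S n a $$ (i,j) else 0)"
  by (simp add: mpoly_of_index coeff_sum coeff_monom)

lemma mcoeff_mpoly_of: "S n a \<in> carrier_mat p p \<Longrightarrow> mcoeff p (mpoly_of p S n) a = (if a \<le> n then S n a else 0\<^sub>m p p)"
  by (rule eq_matI) (auto simp: coeff_mpoly_of)

lemma mform_mpoly_of:
  assumes "\<And>k. S n k \<in> carrier_mat p p" "\<And>l. T m l \<in> carrier_mat p p"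
  shows "mform p W (mpoly_of p S n) (mpoly_of p T m)
     = msum p (\<lambda>(k,l). S n k * gram p W k l * transpose_mat (T m l)) ({..n} \<times> {..m})"
proof -
  have "mform p W (mpoly_of p S n) (mpoly_of p T m) = msum p (\<lambda>(a,b). mcoeff p (mpoly_of p S n) a * gram p W a b
     * transpose_mat (mcoeff p (mpoly_of p T m) b)) ({..<Suc n} \<times> {..<Suc m})"
    by (rule mform_coeff) (auto simp: coeff_mpoly_of)
  also have "\<dots> = msum p (\<lambda>(k,l). S n k * gram p W k l * transpose_mat (T m l)) ({..n} \<times> {..m})"
    unfolding lessThan_Suc_atMost
    by (rule msum_cong) (auto simp: mcoeff_mpoly_of assms)
  finally show ?thesis .
qed

lemma mconst_carrier[simp]: "A \<in> carrier_mat p p \<Longrightarrow> mconst A \<in> carrier_mat p p"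
  by (simp add: mconst_def)
lemma mconst_index[simp]: "i < dim_row A \<Longrightarrow> j < dim_col A \<Longrightarrow> mconst A $$ (i,j) = [:A $$ (i,j):]"
  by (simp add: mconst_def)
lemma mconst_dims[simp]: "dim_row (mconst A) = dim_row A" "dim_col (mconst A) = dim_col A"
  by (simp_all add: mconst_def)
lemma transpose_mconst: "transpose_mat (mconst A) = mconst (transpose_mat A)"
  by (rule eq_matI) auto

lemma mconst_mult_index:
  assumes "A \<in> carrier_mat p p" "P \<in> carrier_mat p p" "i < p" "k < p"
  shows "(mconst A * P) $$ (i,k) = (\<Sum>r<p. smult (A $$ (i,r)) (P $$ (r,k)))"
  using assms by (subst mult_entry[where p=p]) auto

lemma mform_mconst_left:
  assumes A: "A \<in> carrier_mat p p" and P: "P \<in> carrier_mat p p"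
  shows "mform p W (mconst A * P) Q = A * mform p W P Q"
proof (rule eq_matI)
  fix i j assume "i < dim_row (A * mform p W P Q)" "j < dim_col (A * mform p W P Q)"
  hence ij: "i < p" "j < p" using A by auto
  have "mform p W (mconst A * P) Q $$ (i,j) =
     (\<Sum>k<p. \<Sum>l<p. \<Sum>r<p. A $$ (i,r) * kpair (W $$ (k,l)) (P $$ (r,k)) (Q $$ (j,l)))"
    using ij A P by (simp del: index_mult_mat add: mform_index) (intro sum.cong refl; simp del: index_mult_mat add: mconst_mult_index kpair_sum_left kpair_smult_left)
  also have "\<dots> = (\<Sum>k<p. \<Sum>r<p. \<Sum>l<p. A $$ (i,r) * kpair (W $$ (k,l)) (P $$ (r,k)) (Q $$ (j,l)))"
    by (rule sum.cong[OF refl], rule sum.swap)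
  also have "\<dots> = (\<Sum>r<p. \<Sum>k<p. \<Sum>l<p. A $$ (i,r) * kpair (W $$ (k,l)) (P $$ (r,k)) (Q $$ (j,l)))"
    by (rule sum.swap)
  also have "\<dots> = (A * mform p W P Q) $$ (i,j)"
    using ij A by (subst mult_entry[where p=p]) (auto simp: mform_index sum_distrib_left)
  finally show "mform p W (mconst A * P) Q $$ (i,j) = (A * mform p W P Q) $$ (i,j)" .
qed (use A in auto)

lemma mform_mconst_right:
  assumes A: "A \<in> carrier_mat p p" and Q: "Q \<in> carrier_mat p p"
  shows "mform p W P (mconst A * Q) = mform p W P Q * transpose_mat A"
proof (rule eq_matI)
  fix i j assume "i < dim_row (mform p W P Q * transpose_mat A)" "j < dim_col (mform p W P Q * transpose_mat A)"
  hence ij: "i < p" "j < p" using A by auto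
  have "mform p W P (mconst A * Q) $$ (i,j) =
     (\<Sum>k<p. \<Sum>l<p. \<Sum>r<p. A $$ (j,r) * kpair (W $$ (k,l)) (P $$ (i,k)) (Q $$ (r,l)))"
    using ij A Q by (simp del: index_mult_mat add: mform_index) (intro sum.cong refl; simp del: index_mult_mat add: mconst_mult_index kpair_sum_right kpair_smult_right)
  also have "\<dots> = (\<Sum>k<p. \<Sum>r<p. \<Sum>l<p. A $$ (j,r) * kpair (W $$ (k,l)) (P $$ (i,k)) (Q $$ (r,l)))"
    by (rule sum.cong[OF refl], rule sum.swap)
  also have "\<dots> = (\<Sum>r<p. \<Sum>k<p. \<Sum>l<p. A $$ (j,r) * kpair (W $$ (k,l)) (P $$ (i,k)) (Q $$ (r,l)))"
    by (rule sum.swap)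
  also have "\<dots> = (mform p W P Q * transpose_mat A) $$ (i,j)"
    using ij A by (subst mult_entry[where p=p]) (auto simp: mform_index sum_distrib_left sum_distrib_right algebra_simps)
  finally show "mform p W P (mconst A * Q) $$ (i,j) = (mform p W P Q * transpose_mat A) $$ (i,j)" .
qed (use A in auto)

lemma msum_poly_index:
  assumes "i < p" "j < p"
  shows "msum p f K $$ (i,j) = (\<Sum>k\<in>K. f k $$ (i,j))"
  using assms by simp

lemma mform_msum_left:
  shows "mform p W (msum p f K) Q = msum p (\<lambda>k. mform p W (f k) Q) K"
proof (rule eq_matI)
  fix i j assume "i < dim_row (msum p (\<lambda>k. mform p W (f k) Q) K)" "j < dim_col (msum p (\<lambda>k. mform p W (f k) Q) K)"
  hence ij: "i < p" "j < p" by auto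
  show "mform p W (msum p f K) Q $$ (i,j) = msum p (\<lambda>k. mform p W (f k) Q) K $$ (i,j)"
    using ij apply (simp add: mform_index kpair_sum_left)
    by (rule trans[OF sum.cong[OF refl sum.swap] sum.swap])
qed auto

lemma mform_msum_right:
  shows "mform p W P (msum p f K) = msum p (\<lambda>k. mform p W P (f k)) K"
proof (rule eq_matI)
  fix i j assume "i < dim_row (msum p (\<lambda>k. mform p W P (f k)) K)" "j < dim_col (msum p (\<lambda>k. mform p W P (f k)) K)"
  hence ij: "i < p" "j < p" by auto
  show "mform p W P (msum p f K) $$ (i,j) = msum p (\<lambda>k. mform p W P (f k)) K $$ (i,j)"
    using ij apply (simp add: mform_index kpair_sum_right)
    by (rule trans[OF sum.cong[OF refl sum.swap] sum.swap])
qed auto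

lemma mform_diff_left:
  assumes "P \<in> carrier_mat p p" "P' \<in> carrier_mat p p"
  shows "mform p W (P - P') Q = mform p W P Q - mform p W P' Q"
  by (rule eq_matI) (use assms in \<open>auto simp: mform_index kpair_diff_left sum_subtractf\<close>)

lemma mform_diff_right:
  assumes "Q \<in> carrier_mat p p" "Q' \<in> carrier_mat p p"
  shows "mform p W P (Q - Q') = mform p W P Q - mform p W P Q'"
  by (rule eq_matI) (use assms in \<open>auto simp: mform_index kpair_diff_right sum_subtractf\<close>)

lemma mform_add_left:
  assumes "P \<in> carrier_mat p p" "P' \<in> carrier_mat p p"
  shows "mform p W (P + P') Q = mform p W P Q + mform p W P' Q"
  by (rule eq_matI) (use assms in \<open>auto simp: mform_index kpair_add_left sum.distrib\<close>)

lemma mform_add_right: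
  assumes "Q \<in> carrier_mat p p" "Q' \<in> carrier_mat p p"
  shows "mform p W P (Q + Q') = mform p W P Q + mform p W P Q'"
  by (rule eq_matI) (use assms in \<open>auto simp: mform_index kpair_add_right sum.distrib\<close>)

lemma meval_carrier[simp]: "P \<in> carrier_mat p p \<Longrightarrow> meval P z \<in> carrier_mat p p"
  by (simp add: meval_def)
lemma meval_dims[simp]: "dim_row (meval P z) = dim_row P" "dim_col (meval P z) = dim_col P"
  by (simp_all add: meval_def)
lemma meval_index[simp]: "i < dim_row P \<Longrightarrow> j < dim_col P \<Longrightarrow> meval P z $$ (i,j) = poly (P $$ (i,j)) z"
  by (simp add: meval_def)

lemma meval_diff: "P \<in> carrier_mat p p \<Longrightarrow> Q \<in> carrier_mat p p \<Longrightarrow> meval (P - Q) z = meval P z - meval Q z"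
  by (rule eq_matI) auto
lemma meval_add: "P \<in> carrier_mat p p \<Longrightarrow> Q \<in> carrier_mat p p \<Longrightarrow> meval (P + Q) z = meval P z + meval Q z"
  by (rule eq_matI) auto
lemma meval_msum: assumes "\<And>k. k \<in> K \<Longrightarrow> f k \<in> carrier_mat p p"
  shows "meval (msum p f K) z = msum p (\<lambda>k. meval (f k) z) K"
  apply (rule eq_matI) apply (simp_all add: poly_sum)
  apply (intro sum.cong refl) subgoal for i j k using assms[of k] by auto done
lemma meval_mconst_mult:
  assumes "A \<in> carrier_mat p p" "P \<in> carrier_mat p p"
  shows "meval (mconst A * P) z = A * meval P z"
proof (rule eq_matI)
  fix i j assume "i < dim_row (A * meval P z)" "j < dim_col (A * meval P z)"
  hence ij: "i < p" "j < p" using assms by auto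
  have "meval (mconst A * P) z $$ (i,j) = poly ((mconst A * P) $$ (i,j)) z"
    using ij assms by (intro meval_index) auto
  also have "\<dots> = (\<Sum>r<p. A $$ (i,r) * poly (P $$ (r,j)) z)"
    using ij assms by (simp only: mconst_mult_index poly_sum poly_smult)
  also have "\<dots> = (A * meval P z) $$ (i,j)"
    using ij assms by (subst mult_entry[where p=p]) auto
  finally show "meval (mconst A * P) z $$ (i,j) = (A * meval P z) $$ (i,j)" .
qed (use assms in auto)

lemma sum_reindex_block:
  fixes h :: "nat \<Rightarrow> 'a::comm_monoid_add"
  shows "(\<Sum>x<n*p. h x) = (\<Sum>a<n. \<Sum>j<p. h (a*p + j))"
proof (induction n)
  case 0 thus ?case by simp
next
  case (Suc n)
  have "{..<Suc n * p} = {..<n*p} \<union> {n*p..<n*p+p}" by auto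
  hence "(\<Sum>x<Suc n*p. h x) = (\<Sum>x<n*p. h x) + (\<Sum>x\<in>{n*p..<n*p+p}. h x)"
    by (simp add: sum.union_disjoint ivl_disj_int)
  also have "(\<Sum>x\<in>{n*p..<n*p+p}. h x) = (\<Sum>j<p. h (n*p + j))"
  proof -
    have "(\<Sum>x\<in>{n*p..<n*p+p}. h x) = (\<Sum>j\<in>{0..<p}. h (j + n*p))"
      using sum.shift_bounds_nat_ivl[of h 0 "n*p" p] by (simp add: add.commute)
    thus ?thesis by (simp add: atLeast0LessThan add.commute)
  qed
  finally show ?case using Suc by simp
qed

lemma divmod_block: "0 < (p::nat) \<Longrightarrow> j < p \<Longrightarrow> (a*p + j) div p = a \<and> (a*p + j) mod p = j"
  by simp

lemma block_lt: "a < n \<Longrightarrow> j < p \<Longrightarrow> a*p + j < n*(p::nat)"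
proof -
  assume "a < n" "j < p"
  hence "a*p + j < a*p + p" by simp
  also have "\<dots> = Suc a * p" by simp
  also have "\<dots> \<le> n * p" using \<open>a < n\<close> by (intro mult_le_mono1) simp
  finally show ?thesis .
qed

lemma gram_trunc_index:
  assumes "0 < p" "a < n" "b < n" "i < p" "j < p"
  shows "gram_trunc p W n $$ (a*p+i, b*p+j) = gram p W a b $$ (i,j)"
  using assms block_lt[of a n i p] block_lt[of b n j p] by (simp add: gram_trunc_def divmod_block)

lemma inverse_exists:
  assumes "A \<in> carrier_mat m m" "det A \<noteq> (0::complex)"
  shows "\<exists>B. B \<in> carrier_mat m m \<and> A * B = 1\<^sub>m m \<and> B * A = 1\<^sub>m m"
proof -
  have U: "A \<in> Units (ring_mat TYPE(complex) m ())" by (rule det_non_zero_imp_unit[OF assms])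
  show ?thesis
  proof (cases "mat_inverse A")
    case None
    thus ?thesis using mat_inverse(1)[OF assms(1) None, of "()"] U by blast
  next
    case (Some B)
    thus ?thesis using mat_inverse(2)[OF assms(1) Some] by blast
  qed
qed

lemma gram_trunc_inverse:
  assumes "quasidefinite p W" "n \<ge> 1"
  shows "\<exists>B. B \<in> carrier_mat (n*p) (n*p) \<and> gram_trunc p W n * B = 1\<^sub>m (n*p) \<and> B * gram_trunc p W n = 1\<^sub>m (n*p)"
  using assms by (intro inverse_exists) (auto simp: quasidefinite_def gram_trunc_def)

lemma mult_entry_gen:
  assumes "A \<in> carrier_mat m k" "B \<in> carrier_mat k m'" "i < m" "j < m'"
  shows "(A * B) $$ (i,j) = (\<Sum>x<k. A $$ (i,x) * B $$ (x,j))"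
  using assms by (auto simp: scalar_prod_def lessThan_atLeast0 intro!: sum.cong)

lemma solve_row:
  assumes q: "quasidefinite p W" and p: "0 < p" and R: "\<And>l. l < n \<Longrightarrow> R l \<in> carrier_mat p p"
  shows "\<exists>c. (\<forall>a. c a \<in> carrier_mat p p) \<and> (\<forall>l<n. msum p (\<lambda>a. c a * gram p W a l) {..<n} = R l)"
proof (cases "n = 0")
  case True thus ?thesis by (intro exI[of _ "\<lambda>_. 0\<^sub>m p p"]) auto
next
  case False
  let ?G = "gram_trunc p W n"
  have G: "?G \<in> carrier_mat (n*p) (n*p)" by (simp add: gram_trunc_def)
  obtain B where B: "B \<in> carrier_mat (n*p) (n*p)" "B * ?G = 1\<^sub>m (n*p)"
    using gram_trunc_inverse[OF q, of n] False by auto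
  define c where "c a = mat p p (\<lambda>(i,j). \<Sum>b<n*p. R (b div p) $$ (i, b mod p) * B $$ (b, a*p+j))" for a
  show ?thesis
  proof (intro exI[of _ c] conjI allI impI)
    show "c a \<in> carrier_mat p p" for a by (simp add: c_def)
    fix l assume l: "l < n"
    show "msum p (\<lambda>a. c a * gram p W a l) {..<n} = R l"
    proof (rule eq_matI)
      fix i j' assume "i < dim_row (R l)" "j' < dim_col (R l)"
      hence ij: "i < p" "j' < p" using R[OF l] by auto
      define r where "r b = R (b div p) $$ (i, b mod p)" for b
      have lj: "l*p + j' < n*p" using block_lt[OF l ij(2)] .
      have "msum p (\<lambda>a. c a * gram p W a l) {..<n} $$ (i,j') = (\<Sum>a<n. (c a * gram p W a l) $$ (i,j'))"
        using ij by simp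
      also have "\<dots> = (\<Sum>a<n. \<Sum>j<p. c a $$ (i,j) * ?G $$ (a*p+j, l*p+j'))"
        using ij l p by (intro sum.cong refl) (simp del: index_mult_mat add: mult_entry[where p=p] c_def gram_trunc_index)
      also have "\<dots> = (\<Sum>a<n. \<Sum>j<p. \<Sum>b<n*p. r b * (B $$ (b, a*p+j) * ?G $$ (a*p+j, l*p+j')))"
        using ij by (intro sum.cong refl) (simp add: c_def r_def sum_distrib_right mult.assoc)
      also have "\<dots> = (\<Sum>b<n*p. \<Sum>a<n. \<Sum>j<p. r b * (B $$ (b, a*p+j) * ?G $$ (a*p+j, l*p+j')))"
        by (rule trans[OF sum.cong[OF refl sum.swap] sum.swap])
      also have "\<dots> = (\<Sum>b<n*p. r b * (\<Sum>x<n*p. B $$ (b, x) * ?G $$ (x, l*p+j')))"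
        by (intro sum.cong refl) (simp add: sum_reindex_block sum_distrib_left)
      also have "\<dots> = (\<Sum>b<n*p. r b * (B * ?G) $$ (b, l*p+j'))"
        using G lj by (intro sum.cong refl) (simp add: mult_entry_gen[OF B(1) G])
      also have "\<dots> = (\<Sum>b<n*p. if b = l*p+j' then r b else 0)"
        using lj by (intro sum.cong refl) (simp only: B(2), simp)
      also have "\<dots> = r (l*p+j')" using lj by simp
      also have "\<dots> = R l $$ (i,j')" using p ij by (simp add: r_def divmod_block)
      finally show "msum p (\<lambda>a. c a * gram p W a l) {..<n} $$ (i,j') = R l $$ (i,j')" .
    qed (use R[OF l] in auto)
  qed
qed

lemma solve_col:
  assumes q: "quasidefinite p W" and p: "0 < p" and R: "\<And>a. a < n \<Longrightarrow> R a \<in> carrier_mat p p"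
  shows "\<exists>d. (\<forall>b. d b \<in> carrier_mat p p) \<and> (\<forall>a<n. msum p (\<lambda>b. gram p W a b * transpose_mat (d b)) {..<n} = R a)"
proof (cases "n = 0")
  case True thus ?thesis by (intro exI[of _ "\<lambda>_. 0\<^sub>m p p"]) auto
next
  case False
  let ?G = "gram_trunc p W n"
  have G: "?G \<in> carrier_mat (n*p) (n*p)" by (simp add: gram_trunc_def)
  obtain B where B: "B \<in> carrier_mat (n*p) (n*p)" "?G * B = 1\<^sub>m (n*p)"
    using gram_trunc_inverse[OF q, of n] False by auto
  define d where "d b = mat p p (\<lambda>(j,j'). \<Sum>x<n*p. B $$ (b*p+j', x) * R (x div p) $$ (x mod p, j))" for b
  show ?thesis
  proof (intro exI[of _ d] conjI allI impI)
    show "d a \<in> carrier_mat p p" for a by (simp add: d_def)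
    fix a assume a: "a < n"
    show "msum p (\<lambda>b. gram p W a b * transpose_mat (d b)) {..<n} = R a"
    proof (rule eq_matI)
      fix i j assume "i < dim_row (R a)" "j < dim_col (R a)"
      hence ij: "i < p" "j < p" using R[OF a] by auto
      define r where "r x = R (x div p) $$ (x mod p, j)" for x
      have ai: "a*p + i < n*p" using block_lt[OF a ij(1)] .
      have "msum p (\<lambda>b. gram p W a b * transpose_mat (d b)) {..<n} $$ (i,j)
          = (\<Sum>b<n. (gram p W a b * transpose_mat (d b)) $$ (i,j))"
        using ij by simp
      also have "\<dots> = (\<Sum>b<n. \<Sum>j'<p. ?G $$ (a*p+i, b*p+j') * d b $$ (j,j'))"
        using ij a p by (intro sum.cong refl) (simp del: index_mult_mat add: mult_entry[where p=p] d_def gram_trunc_index)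
      also have "\<dots> = (\<Sum>b<n. \<Sum>j'<p. \<Sum>x<n*p. (?G $$ (a*p+i, b*p+j') * B $$ (b*p+j', x)) * r x)"
        using ij by (intro sum.cong refl) (simp add: d_def r_def sum_distrib_left mult.assoc)
      also have "\<dots> = (\<Sum>x<n*p. \<Sum>b<n. \<Sum>j'<p. (?G $$ (a*p+i, b*p+j') * B $$ (b*p+j', x)) * r x)"
        by (rule trans[OF sum.cong[OF refl sum.swap] sum.swap])
      also have "\<dots> = (\<Sum>x<n*p. (\<Sum>y<n*p. ?G $$ (a*p+i, y) * B $$ (y, x)) * r x)"
        by (intro sum.cong refl) (simp add: sum_reindex_block sum_distrib_right)
      also have "\<dots> = (\<Sum>x<n*p. (?G * B) $$ (a*p+i, x) * r x)"
        using G ai by (intro sum.cong refl) (simp add: mult_entry_gen[OF G B(1)])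
      also have "\<dots> = (\<Sum>x<n*p. if x = a*p+i then r x else 0)"
        using ai by (intro sum.cong refl) (simp only: B(2), auto)
      also have "\<dots> = r (a*p+i)" using ai by simp
      also have "\<dots> = R a $$ (i,j)" using p ij by (simp add: r_def divmod_block)
      finally show "msum p (\<lambda>b. gram p W a b * transpose_mat (d b)) {..<n} $$ (i,j) = R a $$ (i,j)" .
    qed (use R[OF a] in auto)
  qed
qed

lemma msum_swap:
  assumes "finite A" "finite B"
  shows "msum p (\<lambda>a. msum p (\<lambda>b. f a b) B) A = msum p (\<lambda>b. msum p (\<lambda>a. f a b) A) B"
  by (rule eq_matI) (auto intro: sum.swap)

lemma msum_assoc2:
  fixes c :: "nat \<Rightarrow> complex mat"
  assumes "finite As" "finite Bs"
    and c: "\<And>a. c a \<in> carrier_mat p p" and X: "\<And>a b. X a b \<in> carrier_mat p p" and Y: "\<And>b. Y b \<in> carrier_mat p p"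
  shows "msum p (\<lambda>a. c a * msum p (\<lambda>b. X a b * Y b) Bs) As = msum p (\<lambda>b. msum p (\<lambda>a. c a * X a b) As * Y b) Bs"
proof -
  have "msum p (\<lambda>a. c a * msum p (\<lambda>b. X a b * Y b) Bs) As = msum p (\<lambda>a. msum p (\<lambda>b. c a * X a b * Y b) Bs) As"
  proof (rule msum_cong)
    fix a
    have "c a * msum p (\<lambda>b. X a b * Y b) Bs = msum p (\<lambda>b. c a * (X a b * Y b)) Bs"
      using c X Y by (intro msum_mult_left) (auto intro!: mult_carrier_mat[of _ p p _ p])
    also have "\<dots> = msum p (\<lambda>b. c a * X a b * Y b) Bs"
      using c X Y by (intro msum_cong) (simp add: assoc_mult_mat[of _ p p _ p _ p])
    finally show "c a * msum p (\<lambda>b. X a b * Y b) Bs = msum p (\<lambda>b. c a * X a b * Y b) Bs" .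
  qed
  also have "\<dots> = msum p (\<lambda>b. msum p (\<lambda>a. c a * X a b * Y b) As) Bs" by (rule msum_swap[OF assms(1,2)])
  also have "\<dots> = msum p (\<lambda>b. msum p (\<lambda>a. c a * X a b) As * Y b) Bs"
    using c X Y by (intro msum_cong msum_mult_right[symmetric]) (auto intro!: mult_carrier_mat[of _ p p _ p])
  finally show ?thesis .
qed

lemma nondeg_row:
  assumes q: "quasidefinite p W" and p: "0 < p" and c: "\<And>a. c a \<in> carrier_mat p p"
    and h: "\<And>l. l < n \<Longrightarrow> msum p (\<lambda>a. c a * gram p W a l) {..<n} = 0\<^sub>m p p"
    and a0: "a0 < n"
  shows "c a0 = 0\<^sub>m p p"
proof -
  have "\<exists>d. (\<forall>b. d b \<in> carrier_mat p p) \<and> (\<forall>a<n. msum p (\<lambda>b. gram p W a b * transpose_mat (d b)) {..<n} = (if a = a0 then 1\<^sub>m p else 0\<^sub>m p p))"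
    by (rule solve_col[OF q p]) auto
  then obtain d where d: "\<And>b. d b \<in> carrier_mat p p"
    and dR: "\<And>a. a < n \<Longrightarrow> msum p (\<lambda>b. gram p W a b * transpose_mat (d b)) {..<n} = (if a = a0 then 1\<^sub>m p else 0\<^sub>m p p)"
    by blast
  have "c a0 = msum p (\<lambda>a. c a * (if a = a0 then 1\<^sub>m p else 0\<^sub>m p p)) {..<n}"
    using a0 c by (subst msum_single[where k=a0]) auto
  also have "\<dots> = msum p (\<lambda>a. c a * msum p (\<lambda>b. gram p W a b * transpose_mat (d b)) {..<n}) {..<n}"
    by (intro msum_cong) (simp add: dR)
  also have "\<dots> = msum p (\<lambda>b. msum p (\<lambda>a. c a * gram p W a b) {..<n} * transpose_mat (d b)) {..<n}"
    using c d by (intro msum_assoc2) auto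
  also have "\<dots> = 0\<^sub>m p p"
    using d by (intro msum_zero) (simp add: h)
  finally show ?thesis .
qed

lemma nondeg_col:
  assumes q: "quasidefinite p W" and p: "0 < p" and d: "\<And>b. d b \<in> carrier_mat p p"
    and h: "\<And>a. a < n \<Longrightarrow> msum p (\<lambda>b. gram p W a b * transpose_mat (d b)) {..<n} = 0\<^sub>m p p"
    and b0: "b0 < n"
  shows "d b0 = 0\<^sub>m p p"
proof -
  have "\<exists>c. (\<forall>a. c a \<in> carrier_mat p p) \<and> (\<forall>l<n. msum p (\<lambda>a. c a * gram p W a l) {..<n} = (if l = b0 then 1\<^sub>m p else 0\<^sub>m p p))"
    by (rule solve_row[OF q p]) auto
  then obtain c where c: "\<And>a. c a \<in> carrier_mat p p"
    and cR: "\<And>l. l < n \<Longrightarrow> msum p (\<lambda>a. c a * gram p W a l) {..<n} = (if l = b0 then 1\<^sub>m p else 0\<^sub>m p p)"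
    by blast
  have "transpose_mat (d b0) = msum p (\<lambda>l. (if l = b0 then 1\<^sub>m p else 0\<^sub>m p p) * transpose_mat (d l)) {..<n}"
    using b0 d by (subst msum_single[where k=b0]) auto
  also have "\<dots> = msum p (\<lambda>l. msum p (\<lambda>a. c a * gram p W a l) {..<n} * transpose_mat (d l)) {..<n}"
    by (intro msum_cong) (simp add: cR)
  also have "\<dots> = msum p (\<lambda>a. c a * msum p (\<lambda>l. gram p W a l * transpose_mat (d l)) {..<n}) {..<n}"
    using c d by (intro msum_assoc2[symmetric]) auto
  also have "\<dots> = 0\<^sub>m p p"
    using c by (intro msum_zero) (simp add: h)
  finally have "transpose_mat (d b0) = 0\<^sub>m p p" .
  hence "transpose_mat (transpose_mat (d b0)) = 0\<^sub>m p p" by simp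
  thus ?thesis by simp
qed

lemma lind_right:
  fixes S :: "nat \<Rightarrow> nat \<Rightarrow> complex mat" and Y :: "nat \<Rightarrow> complex mat" and k n :: nat
  assumes S: "\<And>k. S k k = 1\<^sub>m p" and Sc: "\<And>k a. S k a \<in> carrier_mat p p" and Y: "\<And>b. Y b \<in> carrier_mat p p"
    and h: "\<And>k. k < n \<Longrightarrow> msum p (\<lambda>b. Y b * transpose_mat (S k b)) {..k} = 0\<^sub>m p p"
  shows "k < n \<Longrightarrow> Y k = 0\<^sub>m p p"
proof (induction k rule: less_induct)
  case (less k)
  have "msum p (\<lambda>b. Y b * transpose_mat (S k b)) {..k} = msum p (\<lambda>b. Y b * transpose_mat (S k b)) {..<k} + Y k * transpose_mat (S k k)"
    using Y S by (intro msum_atMost) auto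
  also have "msum p (\<lambda>b. Y b * transpose_mat (S k b)) {..<k} = 0\<^sub>m p p"
    using less Sc by (intro msum_zero) auto
  finally show ?case using h[OF less.prems] Y[of k] S[of k] by simp
qed

lemma lind_left:
  fixes S :: "nat \<Rightarrow> nat \<Rightarrow> complex mat" and Y :: "nat \<Rightarrow> complex mat" and k n :: nat
  assumes S: "\<And>k. S k k = 1\<^sub>m p" and Sc: "\<And>k a. S k a \<in> carrier_mat p p" and Y: "\<And>b. Y b \<in> carrier_mat p p"
    and h: "\<And>k. k < n \<Longrightarrow> msum p (\<lambda>a. S k a * Y a) {..k} = 0\<^sub>m p p"
  shows "k < n \<Longrightarrow> Y k = 0\<^sub>m p p"
proof (induction k rule: less_induct)
  case (less k)
  have "msum p (\<lambda>a. S k a * Y a) {..k} = msum p (\<lambda>a. S k a * Y a) {..<k} + S k k * Y k"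
    using Y S by (intro msum_atMost) auto
  also have "msum p (\<lambda>a. S k a * Y a) {..<k} = 0\<^sub>m p p"
    using less Sc by (intro msum_zero) auto
  finally show ?case using h[OF less.prems] Y[of k] S[of k] by simp
qed

lemma sq_eqI_minus:
  fixes A B :: "'a::comm_ring_1 mat"
  assumes "A \<in> carrier_mat p p" "B \<in> carrier_mat p p" "A - B = 0\<^sub>m p p"
  shows "A = B"
proof (rule eq_matI)
  fix i j assume ij: "i < dim_row B" "j < dim_col B"
  have "(A - B) $$ (i,j) = A $$ (i,j) - B $$ (i,j)" using assms(1,2) ij by simp
  moreover have "(A - B) $$ (i,j) = 0" using assms ij by simp
  ultimately show "A $$ (i,j) = B $$ (i,j)" by simp
qed (use assms in auto)

lemma sq_add_cancel:
  fixes A B G :: "'a::comm_ring_1 mat"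
  assumes "A \<in> carrier_mat p p" "B \<in> carrier_mat p p" "G \<in> carrier_mat p p" "A + G = B + G"
  shows "A = B"
proof (rule eq_matI)
  fix i j assume ij: "i < dim_row B" "j < dim_col B"
  have "(A + G) $$ (i,j) = A $$ (i,j) + G $$ (i,j)" "(B + G) $$ (i,j) = B $$ (i,j) + G $$ (i,j)"
    using assms(1,2,3) ij by auto
  moreover have "(A + G) $$ (i,j) = (B + G) $$ (i,j)" using assms by simp
  ultimately show "A $$ (i,j) = B $$ (i,j)" by simp
qed (use assms in auto)

lemma gf_props:
  assumes "gauss_fact p W A H C"
  shows "\<And>n k. A n k \<in> carrier_mat p p" "\<And>n k. C n k \<in> carrier_mat p p" "\<And>n. H n \<in> carrier_mat p p"
    "\<And>n. A n n = 1\<^sub>m p" "\<And>n. C n n = 1\<^sub>m p"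
    "\<And>n k. n < k \<Longrightarrow> A n k = 0\<^sub>m p p" "\<And>n k. n < k \<Longrightarrow> C n k = 0\<^sub>m p p"
    "\<And>n m. msum p (\<lambda>(k,l). A n k * gram p W k l * transpose_mat (C m l)) ({..n} \<times> {..m})
            = (if n = m then H n else 0\<^sub>m p p)"
  using assms unfolding gauss_fact_def by blast+

lemma gf_orth_row:
  assumes gf: "gauss_fact p W A H C" and l: "l < n"
  shows "msum p (\<lambda>k. A n k * gram p W k l) {..n} = 0\<^sub>m p p"
proof -
  note g = gf_props[OF gf]
  define Y where "Y l = msum p (\<lambda>k. A n k * gram p W k l) {..n}" for l
  have Yc: "Y l \<in> carrier_mat p p" for l by (simp add: Y_def)
  have "msum p (\<lambda>l. Y l * transpose_mat (C m l)) {..m} = 0\<^sub>m p p" if m: "m < n" for m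
  proof -
    have "msum p (\<lambda>l. Y l * transpose_mat (C m l)) {..m}
        = msum p (\<lambda>l. msum p (\<lambda>k. A n k * gram p W k l * transpose_mat (C m l)) {..n}) {..m}"
      unfolding Y_def using g by (intro msum_cong msum_mult_right) auto
    also have "\<dots> = msum p (\<lambda>(k,l). A n k * gram p W k l * transpose_mat (C m l)) ({..n} \<times> {..m})"
      by (subst msum_Sigma') auto
    also have "\<dots> = 0\<^sub>m p p" using g(8)[of n m] m by simp
    finally show ?thesis .
  qed
  from lind_right[where S=C and Y=Y, OF g(5) g(2) Yc this l]
  show ?thesis by (simp add: Y_def)
qed

lemma gf_orth_col:
  assumes gf: "gauss_fact p W A H C" and k: "k < m"
  shows "msum p (\<lambda>l. gram p W k l * transpose_mat (C m l)) {..m} = 0\<^sub>m p p"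
proof -
  note g = gf_props[OF gf]
  define Z where "Z k = msum p (\<lambda>l. gram p W k l * transpose_mat (C m l)) {..m}" for k
  have Zc: "Z k \<in> carrier_mat p p" for k by (simp add: Z_def)
  have "msum p (\<lambda>k. A n k * Z k) {..n} = 0\<^sub>m p p" if n: "n < m" for n
  proof -
    have "msum p (\<lambda>k. A n k * Z k) {..n}
        = msum p (\<lambda>k. msum p (\<lambda>l. A n k * (gram p W k l * transpose_mat (C m l))) {..m}) {..n}"
      unfolding Z_def using g by (intro msum_cong msum_mult_left) auto
    also have "\<dots> = msum p (\<lambda>k. msum p (\<lambda>l. A n k * gram p W k l * transpose_mat (C m l)) {..m}) {..n}"
      using g by (intro msum_cong) (simp add: assoc_mult_mat[of _ p p _ p _ p])
    also have "\<dots> = msum p (\<lambda>(k,l). A n k * gram p W k l * transpose_mat (C m l)) ({..n} \<times> {..m})"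
      by (subst msum_Sigma) auto
    also have "\<dots> = 0\<^sub>m p p" using g(8)[of n m] n by simp
    finally show ?thesis .
  qed
  from lind_left[where S=A and Y=Z, OF g(4) g(1) Zc this k]
  show ?thesis by (simp add: Z_def)
qed

lemma gf_row_cancel:
  assumes gf: "gauss_fact p W A H C" and l: "l < n"
  shows "msum p (\<lambda>k. A n k * gram p W k l) {..<n} + gram p W n l = 0\<^sub>m p p"
proof -
  note g = gf_props[OF gf]
  have "msum p (\<lambda>k. A n k * gram p W k l) {..n} = msum p (\<lambda>k. A n k * gram p W k l) {..<n} + A n n * gram p W n l"
    using g by (intro msum_atMost) auto
  thus ?thesis using gf_orth_row[OF gf l] g(4)[of n] by simp
qed

lemma gf_col_cancel:
  assumes gf: "gauss_fact p W A H C" and k: "k < m"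
  shows "msum p (\<lambda>l. gram p W k l * transpose_mat (C m l)) {..<m} + gram p W k m = 0\<^sub>m p p"
proof -
  note g = gf_props[OF gf]
  have "msum p (\<lambda>l. gram p W k l * transpose_mat (C m l)) {..m} = msum p (\<lambda>l. gram p W k l * transpose_mat (C m l)) {..<m} + gram p W k m * transpose_mat (C m m)"
    using g by (intro msum_atMost) auto
  thus ?thesis using gf_orth_col[OF gf k] g(5)[of m] by simp
qed

lemma gf_unique:
  assumes q: "quasidefinite p W" and p: "0 < p"
    and gf1: "gauss_fact p W A H C" and gf2: "gauss_fact p W A' H' C'"
  shows "A = A' \<and> H = H' \<and> C = C'"
proof -
  note g = gf_props[OF gf1] and g' = gf_props[OF gf2]
  have AA: "A n k = A' n k" for n k
  proof (cases "k < n")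
    case kn: True
    define c where "c a = A n a - A' n a" for a
    have cc: "c a \<in> carrier_mat p p" for a using g(1) g'(1) by (simp add: c_def)
    have "msum p (\<lambda>a. c a * gram p W a l) {..<n} = 0\<^sub>m p p" if l: "l < n" for l
    proof -
      have e: "msum p (\<lambda>k. A n k * gram p W k l) {..<n} = msum p (\<lambda>k. A' n k * gram p W k l) {..<n}"
        by (rule sq_add_cancel[where G="gram p W n l" and p=p]) (simp_all add: gf_row_cancel[OF gf1 l] gf_row_cancel[OF gf2 l])
      have "msum p (\<lambda>a. c a * gram p W a l) {..<n} = msum p (\<lambda>a. A n a * gram p W a l - A' n a * gram p W a l) {..<n}"
        unfolding c_def using g(1) g'(1) by (intro msum_cong minus_mult_distrib_mat[where n=p and nr=p and nc=p]) auto
      also have "\<dots> = msum p (\<lambda>k. A n k * gram p W k l) {..<n} - msum p (\<lambda>k. A' n k * gram p W k l) {..<n}"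
        using g(1) g'(1) by (intro msum_diff) auto
      also have "\<dots> = 0\<^sub>m p p" unfolding e by simp
      finally show ?thesis .
    qed
    from nondeg_row[OF q p cc this kn] have "A n k - A' n k = 0\<^sub>m p p" by (simp add: c_def)
    from sq_eqI_minus[OF g(1)[of n k] g'(1)[of n k] this] show ?thesis .
  next
    case False
    thus ?thesis using g(4,6) g'(4,6) by (cases "k = n") auto
  qed
  have CC: "C m l = C' m l" for m l
  proof (cases "l < m")
    case lm: True
    define d where "d b = C m b - C' m b" for b
    have dc: "d b \<in> carrier_mat p p" for b using g(2) g'(2) by (simp add: d_def)
    have "msum p (\<lambda>b. gram p W k b * transpose_mat (d b)) {..<m} = 0\<^sub>m p p" if k: "k < m" for k
    proof -
      have e: "msum p (\<lambda>l. gram p W k l * transpose_mat (C m l)) {..<m} = msum p (\<lambda>l. gram p W k l * transpose_mat (C' m l)) {..<m}"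
        by (rule sq_add_cancel[where G="gram p W k m" and p=p]) (simp_all add: gf_col_cancel[OF gf1 k] gf_col_cancel[OF gf2 k])
      have "msum p (\<lambda>b. gram p W k b * transpose_mat (d b)) {..<m}
          = msum p (\<lambda>b. gram p W k b * transpose_mat (C m b) - gram p W k b * transpose_mat (C' m b)) {..<m}"
        unfolding d_def using g(2) g'(2)
        by (intro msum_cong) (simp add: transpose_minus[where nr=p and nc=p] mult_minus_distrib_mat[where n=p and nr=p and nc=p])
      also have "\<dots> = msum p (\<lambda>l. gram p W k l * transpose_mat (C m l)) {..<m} - msum p (\<lambda>l. gram p W k l * transpose_mat (C' m l)) {..<m}"
        using g(2) g'(2) by (intro msum_diff) auto
      also have "\<dots> = 0\<^sub>m p p" unfolding e by simp
      finally show ?thesis .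
    qed
    from nondeg_col[OF q p dc this lm] have "C m l - C' m l = 0\<^sub>m p p" by (simp add: d_def)
    from sq_eqI_minus[OF g(2)[of m l] g'(2)[of m l] this] show ?thesis .
  next
    case False
    thus ?thesis using g(5,7) g'(5,7) by (cases "l = m") auto
  qed
  have A: "A = A'" using AA by (intro ext)
  have C: "C = C'" using CC by (intro ext)
  have "H n = H' n" for n using g(8)[of n n] g'(8)[of n n] A C by simp
  hence "H = H'" by (intro ext)
  with A C show ?thesis by simp
qed

lemma gf_exists:
  assumes q: "quasidefinite p W" and p: "0 < p"
  shows "\<exists>A H C. gauss_fact p W A H C"
proof -
  have "\<forall>n. \<exists>c. (\<forall>a. c a \<in> carrier_mat p p) \<and> (\<forall>l<n. msum p (\<lambda>a. c a * gram p W a l) {..<n} = - gram p W n l)"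
    by (intro allI solve_row[OF q p]) simp
  from choice[OF this] obtain f where
    "\<forall>n. (\<forall>a. f n a \<in> carrier_mat p p) \<and> (\<forall>l<n. msum p (\<lambda>a. f n a * gram p W a l) {..<n} = - gram p W n l)"
    by blast
  hence f: "\<And>n a. f n a \<in> carrier_mat p p"
    and fr: "\<And>n l. l < n \<Longrightarrow> msum p (\<lambda>a. f n a * gram p W a l) {..<n} = - gram p W n l"
    by blast+
  have "\<forall>m. \<exists>d. (\<forall>b. d b \<in> carrier_mat p p) \<and> (\<forall>k<m. msum p (\<lambda>b. gram p W k b * transpose_mat (d b)) {..<m} = - gram p W k m)"
    by (intro allI solve_col[OF q p]) simp
  from choice[OF this] obtain g where
    "\<forall>m. (\<forall>b. g m b \<in> carrier_mat p p) \<and> (\<forall>k<m. msum p (\<lambda>b. gram p W k b * transpose_mat (g m b)) {..<m} = - gram p W k m)"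
    by blast
  hence gc: "\<And>m b. g m b \<in> carrier_mat p p"
    and gr: "\<And>m k. k < m \<Longrightarrow> msum p (\<lambda>b. gram p W k b * transpose_mat (g m b)) {..<m} = - gram p W k m"
    by blast+
  define A where "A n k = (if k = n then 1\<^sub>m p else if k < n then f n k else 0\<^sub>m p p)" for n k
  define C where "C m l = (if l = m then 1\<^sub>m p else if l < m then g m l else 0\<^sub>m p p)" for m l
  define H where "H n = msum p (\<lambda>(k,l). A n k * gram p W k l * transpose_mat (C n l)) ({..n} \<times> {..n})" for n
  have Ac: "A n k \<in> carrier_mat p p" for n k using f by (simp add: A_def)
  have Cc: "C n k \<in> carrier_mat p p" for n k using gc by (simp add: C_def)
  have rowz: "msum p (\<lambda>k. A n k * gram p W k l) {..n} = 0\<^sub>m p p" if l: "l < n" for n l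
  proof -
    have "msum p (\<lambda>k. A n k * gram p W k l) {..n} = msum p (\<lambda>k. A n k * gram p W k l) {..<n} + A n n * gram p W n l"
      using Ac by (intro msum_atMost) auto
    also have "msum p (\<lambda>k. A n k * gram p W k l) {..<n} = msum p (\<lambda>k. f n k * gram p W k l) {..<n}"
      by (intro msum_cong) (simp add: A_def)
    finally show ?thesis using fr[OF l] by (simp add: A_def)
  qed
  have colz: "msum p (\<lambda>l. gram p W k l * transpose_mat (C m l)) {..m} = 0\<^sub>m p p" if k: "k < m" for k m
  proof -
    have "msum p (\<lambda>l. gram p W k l * transpose_mat (C m l)) {..m} = msum p (\<lambda>l. gram p W k l * transpose_mat (C m l)) {..<m} + gram p W k m * transpose_mat (C m m)"
      using Cc by (intro msum_atMost) auto
    also have "msum p (\<lambda>l. gram p W k l * transpose_mat (C m l)) {..<m} = msum p (\<lambda>l. gram p W k l * transpose_mat (g m l)) {..<m}"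
      by (intro msum_cong) (simp add: C_def)
    finally show ?thesis using gr[OF k] by (simp add: C_def)
  qed
  have orth: "msum p (\<lambda>(k,l). A n k * gram p W k l * transpose_mat (C m l)) ({..n} \<times> {..m})
            = (if n = m then H n else 0\<^sub>m p p)" for n m
  proof (cases "n = m")
    case True thus ?thesis by (simp add: H_def)
  next
    case False
    show ?thesis
    proof (cases "m < n")
      case True
      have "msum p (\<lambda>(k,l). A n k * gram p W k l * transpose_mat (C m l)) ({..n} \<times> {..m})
          = msum p (\<lambda>l. msum p (\<lambda>k. A n k * gram p W k l * transpose_mat (C m l)) {..n}) {..m}"
        by (subst msum_Sigma') auto
      also have "\<dots> = msum p (\<lambda>l. msum p (\<lambda>k. A n k * gram p W k l) {..n} * transpose_mat (C m l)) {..m}"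
        using Ac Cc by (intro msum_cong msum_mult_right[symmetric]) auto
      also have "\<dots> = 0\<^sub>m p p"
        using Cc True by (intro msum_zero) (simp add: rowz)
      finally show ?thesis using False by simp
    next
      case nm: False
      hence nm: "n < m" using False by simp
      have "msum p (\<lambda>(k,l). A n k * gram p W k l * transpose_mat (C m l)) ({..n} \<times> {..m})
          = msum p (\<lambda>k. msum p (\<lambda>l. A n k * gram p W k l * transpose_mat (C m l)) {..m}) {..n}"
        by (subst msum_Sigma) auto
      also have "\<dots> = msum p (\<lambda>k. msum p (\<lambda>l. A n k * (gram p W k l * transpose_mat (C m l))) {..m}) {..n}"
        using Ac Cc by (intro msum_cong) (simp add: assoc_mult_mat[of _ p p _ p _ p])
      also have "\<dots> = msum p (\<lambda>k. A n k * msum p (\<lambda>l. gram p W k l * transpose_mat (C m l)) {..m}) {..n}"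
        using Ac Cc by (intro msum_cong msum_mult_left[symmetric]) auto
      also have "\<dots> = 0\<^sub>m p p"
        using Ac nm by (intro msum_zero) (simp add: colz)
      finally show ?thesis using False by simp
    qed
  qed
  have Hc: "H n \<in> carrier_mat p p" for n by (simp add: H_def)
  have d1: "A n n = 1\<^sub>m p \<and> C n n = 1\<^sub>m p" for n by (simp add: A_def C_def)
  have d2: "A n k = 0\<^sub>m p p \<and> C n k = 0\<^sub>m p p" if "n < k" for n k using that by (simp add: A_def C_def)
  have "gauss_fact p W A H C"
    unfolding gauss_fact_def using Ac Cc Hc d1 d2 orth by blast
  thus ?thesis by blast
qed

lemma gf_main:
  assumes q: "quasidefinite p W" and p: "0 < p"
  shows "gauss_fact p W (S1 p W) (Hn p W) (S2 p W)"
proof -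
  let ?P = "\<lambda>t. case t of (A, H, C) \<Rightarrow> gauss_fact p W A H C"
  have ex1: "\<exists>!t. ?P t"
  proof -
    from gf_exists[OF q p] obtain A H C where "gauss_fact p W A H C" by blast
    hence "?P (A,H,C)" by simp
    moreover have "t = (A,H,C)" if "?P t" for t
      using that gf_unique[OF q p, of A H C] \<open>gauss_fact p W A H C\<close>
      by (cases t) auto
    ultimately show ?thesis by blast
  qed
  have "gfact p W = (THE t. ?P t)" unfolding gfact_def by simp
  hence "?P (gfact p W)" using theI'[OF ex1] by simp
  thus ?thesis unfolding S1_def Hn_def S2_def by (cases "gfact p W") auto
qed

lemma minv_props:
  assumes A: "A \<in> carrier_mat p p" and B: "B \<in> carrier_mat p p" and BA: "B * A = 1\<^sub>m p"
  shows "minv A \<in> carrier_mat p p \<and> A * minv A = 1\<^sub>m p \<and> minv A * A = 1\<^sub>m p"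
proof -
  have AB: "A * B = 1\<^sub>m p" by (rule mat_mult_left_right_inverse[OF B A BA])
  have "det A * det B = 1" using det_mult[OF A B] AB by simp
  hence "det A \<noteq> 0" by auto
  hence U: "A \<in> Units (ring_mat TYPE(complex) p ())" by (rule det_non_zero_imp_unit[OF A])
  show ?thesis
  proof (cases "mat_inverse A")
    case None
    have "A \<notin> Units (ring_mat TYPE(complex) p ())" by (rule mat_inverse(1)[OF A None])
    thus ?thesis using U by contradiction
  next
    case (Some X)
    thus ?thesis using mat_inverse(2)[OF A Some] by (simp add: minv_def)
  qed
qed

lemma H_expand:
  assumes gf: "gauss_fact p W A H C"
  shows "H n = msum p (\<lambda>l. gram p W n l * transpose_mat (C n l)) {..n}"
proof -
  note g = gf_props[OF gf]
  define Z where "Z k = msum p (\<lambda>l. gram p W k l * transpose_mat (C n l)) {..n}" for k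
  have Zc: "Z k \<in> carrier_mat p p" for k by (simp add: Z_def)
  have "H n = msum p (\<lambda>(k,l). A n k * gram p W k l * transpose_mat (C n l)) ({..n} \<times> {..n})"
    using g(8)[of n n] by simp
  also have "\<dots> = msum p (\<lambda>k. msum p (\<lambda>l. A n k * gram p W k l * transpose_mat (C n l)) {..n}) {..n}"
    by (subst msum_Sigma) auto
  also have "\<dots> = msum p (\<lambda>k. msum p (\<lambda>l. A n k * (gram p W k l * transpose_mat (C n l))) {..n}) {..n}"
    using g by (intro msum_cong) (simp add: assoc_mult_mat[of _ p p _ p _ p])
  also have "\<dots> = msum p (\<lambda>k. A n k * Z k) {..n}"
    unfolding Z_def using g by (intro msum_cong msum_mult_left[symmetric]) auto
  also have "\<dots> = msum p (\<lambda>k. A n k * Z k) {..<n} + A n n * Z n"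
    using g Zc by (intro msum_atMost) auto
  also have "msum p (\<lambda>k. A n k * Z k) {..<n} = 0\<^sub>m p p"
    using g by (intro msum_zero) (simp add: Z_def gf_orth_col[OF gf])
  finally show ?thesis using g(4)[of n] Zc[of n] by (simp add: Z_def)
qed

lemma H_left_inverse:
  assumes q: "quasidefinite p W" and p: "0 < p" and gf: "gauss_fact p W A H C"
  shows "\<exists>X. X \<in> carrier_mat p p \<and> X * H n = 1\<^sub>m p"
proof -
  note g = gf_props[OF gf]
  define Z where "Z k = msum p (\<lambda>l. gram p W k l * transpose_mat (C n l)) {..n}" for k
  have Zc: "Z k \<in> carrier_mat p p" for k by (simp add: Z_def)
  have "\<exists>c. (\<forall>a. c a \<in> carrier_mat p p) \<and> (\<forall>l<Suc n. msum p (\<lambda>a. c a * gram p W a l) {..<Suc n} = (if l = n then 1\<^sub>m p else 0\<^sub>m p p))"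
    by (rule solve_row[OF q p]) auto
  then obtain c where c: "\<And>a. c a \<in> carrier_mat p p"
    and cR: "\<And>l. l < Suc n \<Longrightarrow> msum p (\<lambda>a. c a * gram p W a l) {..<Suc n} = (if l = n then 1\<^sub>m p else 0\<^sub>m p p)"
    by blast
  have "c n * Z n = msum p (\<lambda>a. c a * Z a) {..n}"
    using c Zc by (subst msum_single[where k=n]) (auto simp: Z_def gf_orth_col[OF gf])
  also have "\<dots> = msum p (\<lambda>l. msum p (\<lambda>a. c a * gram p W a l) {..n} * transpose_mat (C n l)) {..n}"
    unfolding Z_def using c g(2) by (intro msum_assoc2) auto
  also have "\<dots> = msum p (\<lambda>l. (if l = n then 1\<^sub>m p else 0\<^sub>m p p) * transpose_mat (C n l)) {..n}"
  proof (rule msum_cong)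
    fix l assume "l \<in> {..n}"
    hence "l < Suc n" by simp
    from cR[OF this] show "msum p (\<lambda>a. c a * gram p W a l) {..n} * transpose_mat (C n l) =
       (if l = n then 1\<^sub>m p else 0\<^sub>m p p) * transpose_mat (C n l)" by (simp add: lessThan_Suc_atMost)
  qed
  also have "\<dots> = 1\<^sub>m p"
    using g(2,5) by (subst msum_single[where k=n]) auto
  finally have "c n * Z n = 1\<^sub>m p" .
  moreover have "Z n = H n" using H_expand[OF gf] by (simp add: Z_def)
  ultimately have "c n * H n = 1\<^sub>m p" by simp
  thus ?thesis using c[of n] by blast
qed

lemma H_inv:
  assumes q: "quasidefinite p W" and p: "0 < p"
  shows "minv (Hn p W n) \<in> carrier_mat p p \<and> Hn p W n * minv (Hn p W n) = 1\<^sub>m p \<and> minv (Hn p W n) * Hn p W n = 1\<^sub>m p"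
proof -
  note gf = gf_main[OF q p]
  obtain X where "X \<in> carrier_mat p p" "X * Hn p W n = 1\<^sub>m p" using H_left_inverse[OF q p gf] by blast
  thus ?thesis using gf_props(3)[OF gf] by (intro minv_props) auto
qed

lemma P1_carrier[simp]: "P1 p W n \<in> carrier_mat p p" by (simp add: P1_def)
lemma P2_carrier[simp]: "P2 p W n \<in> carrier_mat p p" by (simp add: P2_def)
lemma P12_dims[simp]: "dim_row (P1 p W n) = p" "dim_col (P1 p W n) = p" "dim_row (P2 p W n) = p" "dim_col (P2 p W n) = p"
  by (simp_all add: P1_def P2_def mpoly_of_def)

lemma K1:
  assumes q: "quasidefinite p W" and p: "0 < p"
  shows "mform p W (P1 p W n) (P2 p W m) = (if n = m then Hn p W n else 0\<^sub>m p p)"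
proof -
  note g = gf_props[OF gf_main[OF q p]]
  show ?thesis unfolding P1_def P2_def
    by (subst mform_mpoly_of) (use g in auto)
qed

lemma K2:
  assumes q: "quasidefinite p W" and p: "0 < p" and k: "k < n" and T: "\<And>b. T k b \<in> carrier_mat p p"
  shows "mform p W (P1 p W n) (mpoly_of p T k) = 0\<^sub>m p p"
proof -
  note gf = gf_main[OF q p]
  note g = gf_props[OF gf]
  have "mform p W (P1 p W n) (mpoly_of p T k)
      = msum p (\<lambda>(a,b). S1 p W n a * gram p W a b * transpose_mat (T k b)) ({..n} \<times> {..k})"
    unfolding P1_def by (rule mform_mpoly_of) (use g T in auto)
  also have "\<dots> = msum p (\<lambda>b. msum p (\<lambda>a. S1 p W n a * gram p W a b * transpose_mat (T k b)) {..n}) {..k}"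
    by (subst msum_Sigma') auto
  also have "\<dots> = msum p (\<lambda>b. msum p (\<lambda>a. S1 p W n a * gram p W a b) {..n} * transpose_mat (T k b)) {..k}"
    using g(1) T by (intro msum_cong msum_mult_right[symmetric]) auto
  also have "\<dots> = 0\<^sub>m p p"
    using T k by (intro msum_zero) (simp add: gf_orth_row[OF gf])
  finally show ?thesis .
qed

lemma K3:
  assumes q: "quasidefinite p W" and p: "0 < p" and k: "k < m" and T: "\<And>a. T k a \<in> carrier_mat p p"
  shows "mform p W (mpoly_of p T k) (P2 p W m) = 0\<^sub>m p p"
proof -
  note gf = gf_main[OF q p]
  note g = gf_props[OF gf]
  have "mform p W (mpoly_of p T k) (P2 p W m)
      = msum p (\<lambda>(a,b). T k a * gram p W a b * transpose_mat (S2 p W m b)) ({..k} \<times> {..m})"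
    unfolding P2_def by (rule mform_mpoly_of) (use g T in auto)
  also have "\<dots> = msum p (\<lambda>a. msum p (\<lambda>b. T k a * gram p W a b * transpose_mat (S2 p W m b)) {..m}) {..k}"
    by (subst msum_Sigma) auto
  also have "\<dots> = msum p (\<lambda>a. msum p (\<lambda>b. T k a * (gram p W a b * transpose_mat (S2 p W m b))) {..m}) {..k}"
    using g(2) T by (intro msum_cong) (simp add: assoc_mult_mat[of _ p p _ p _ p])
  also have "\<dots> = msum p (\<lambda>a. T k a * msum p (\<lambda>b. gram p W a b * transpose_mat (S2 p W m b)) {..m}) {..k}"
    using g(2) T by (intro msum_cong msum_mult_left[symmetric]) auto
  also have "\<dots> = 0\<^sub>m p p"
    using T k by (intro msum_zero) (simp add: gf_orth_col[OF gf])
  finally show ?thesis .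
qed

lemma poly_mat_zeroI:
  assumes D: "D \<in> carrier_mat p p"
    and c: "\<And>i j a. i < p \<Longrightarrow> j < p \<Longrightarrow> coeff (D $$ (i,j)) a = 0"
  shows "D = (0\<^sub>m p p :: complex poly mat)"
  by (rule eq_matI) (use D c in \<open>auto intro!: poly_eqI\<close>)

lemma mcoeff_P2: "b \<le> k \<Longrightarrow> S2 p W k b \<in> carrier_mat p p \<Longrightarrow> mcoeff p (P2 p W k) b = S2 p W k b"
  unfolding P2_def by (simp add: mcoeff_mpoly_of)
lemma mcoeff_P1: "b \<le> k \<Longrightarrow> S1 p W k b \<in> carrier_mat p p \<Longrightarrow> mcoeff p (P1 p W k) b = S1 p W k b"
  unfolding P1_def by (simp add: mcoeff_mpoly_of)

lemma K4:
  assumes q: "quasidefinite p W" and p: "0 < p" and D: "D \<in> carrier_mat p p"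
    and cD: "\<And>i j a. i < p \<Longrightarrow> j < p \<Longrightarrow> a \<ge> n \<Longrightarrow> coeff (D $$ (i,j)) a = 0"
    and orth: "\<And>k. k < n \<Longrightarrow> mform p W D (P2 p W k) = 0\<^sub>m p p"
  shows "D = 0\<^sub>m p p"
proof -
  note gf = gf_main[OF q p]
  note g = gf_props[OF gf]
  define Y where "Y b = msum p (\<lambda>a. mcoeff p D a * gram p W a b) {..<n}" for b
  have Yc: "Y b \<in> carrier_mat p p" for b by (simp add: Y_def)
  have "msum p (\<lambda>b. Y b * transpose_mat (S2 p W k b)) {..k} = 0\<^sub>m p p" if k: "k < n" for k
  proof -
    have "mform p W D (P2 p W k) = msum p (\<lambda>(a,b). mcoeff p D a * gram p W a b * transpose_mat (mcoeff p (P2 p W k) b))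
        ({..<n} \<times> {..<Suc k})"
      by (rule mform_coeff) (use D cD in \<open>auto simp: P2_def coeff_mpoly_of\<close>)
    also have "\<dots> = msum p (\<lambda>b. msum p (\<lambda>a. mcoeff p D a * gram p W a b * transpose_mat (S2 p W k b)) {..<n}) {..k}"
      by (subst msum_Sigma') (auto simp: lessThan_Suc_atMost intro!: msum_cong simp: mcoeff_P2 g(2))
    also have "\<dots> = msum p (\<lambda>b. Y b * transpose_mat (S2 p W k b)) {..k}"
      unfolding Y_def using g(2) by (intro msum_cong msum_mult_right[symmetric]) auto
    finally show ?thesis using orth[OF k] by simp
  qed
  from lind_right[where S="S2 p W" and Y=Y, OF g(5) g(2) Yc this]
  have Y0: "b < n \<Longrightarrow> Y b = 0\<^sub>m p p" for b .
  have c0: "mcoeff p D a = 0\<^sub>m p p" if a: "a < n" for a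
    by (rule nondeg_row[OF q p mcoeff_carrier _ a]) (use Y0 in \<open>simp add: Y_def\<close>)
  show ?thesis
  proof (rule poly_mat_zeroI[OF D])
    fix i j a assume ij: "i < p" "j < p"
    show "coeff (D $$ (i,j)) a = 0"
    proof (cases "a < n")
      case True
      have "mcoeff p D a $$ (i,j) = 0" using c0[OF True] ij by simp
      thus ?thesis using ij by simp
    qed (use cD ij in auto)
  qed
qed

lemma K5:
  assumes q: "quasidefinite p W" and p: "0 < p" and E: "E \<in> carrier_mat p p"
    and cE: "\<And>i j a. i < p \<Longrightarrow> j < p \<Longrightarrow> a \<ge> n \<Longrightarrow> coeff (E $$ (i,j)) a = 0"
    and orth: "\<And>k. k < n \<Longrightarrow> mform p W (P1 p W k) E = 0\<^sub>m p p"
  shows "E = 0\<^sub>m p p"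
proof -
  note gf = gf_main[OF q p]
  note g = gf_props[OF gf]
  define Z where "Z a = msum p (\<lambda>b. gram p W a b * transpose_mat (mcoeff p E b)) {..<n}" for a
  have Zc: "Z b \<in> carrier_mat p p" for b by (simp add: Z_def)
  have "msum p (\<lambda>a. S1 p W k a * Z a) {..k} = 0\<^sub>m p p" if k: "k < n" for k
  proof -
    have "mform p W (P1 p W k) E = msum p (\<lambda>(a,b). mcoeff p (P1 p W k) a * gram p W a b * transpose_mat (mcoeff p E b))
        ({..<Suc k} \<times> {..<n})"
      by (rule mform_coeff) (use E cE in \<open>auto simp: P1_def coeff_mpoly_of\<close>)
    also have "\<dots> = msum p (\<lambda>a. msum p (\<lambda>b. S1 p W k a * gram p W a b * transpose_mat (mcoeff p E b)) {..<n}) {..k}"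
      by (subst msum_Sigma) (auto simp: lessThan_Suc_atMost intro!: msum_cong simp: mcoeff_P1 g(1))
    also have "\<dots> = msum p (\<lambda>a. msum p (\<lambda>b. S1 p W k a * (gram p W a b * transpose_mat (mcoeff p E b))) {..<n}) {..k}"
      using g(1) by (intro msum_cong) (simp add: assoc_mult_mat[of _ p p _ p _ p])
    also have "\<dots> = msum p (\<lambda>a. S1 p W k a * Z a) {..k}"
      unfolding Z_def using g(1) by (intro msum_cong msum_mult_left[symmetric]) auto
    finally show ?thesis using orth[OF k] by simp
  qed
  from lind_left[where S="S1 p W" and Y=Z, OF g(4) g(1) Zc this]
  have Z0: "a < n \<Longrightarrow> Z a = 0\<^sub>m p p" for a .
  have c0: "mcoeff p E b = 0\<^sub>m p p" if b: "b < n" for b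
    by (rule nondeg_col[OF q p mcoeff_carrier _ b]) (use Z0 in \<open>simp add: Z_def\<close>)
  show ?thesis
  proof (rule poly_mat_zeroI[OF E])
    fix i j a assume ij: "i < p" "j < p"
    show "coeff (E $$ (i,j)) a = 0"
    proof (cases "a < n")
      case True
      have "mcoeff p E a $$ (i,j) = 0" using c0[OF True] ij by simp
      thus ?thesis using ij by simp
    qed (use cE ij in auto)
  qed
qed

lemma sq_minus_zero_r[simp]: "(A :: 'a :: comm_ring_1 mat) \<in> carrier_mat p p \<Longrightarrow> A - 0\<^sub>m p p = A"
  by (rule eq_matI) auto

lemma sq_solve:
  fixes X Y S :: "'a :: comm_ring_1 mat"
  assumes "X \<in> carrier_mat p p" "Y \<in> carrier_mat p p" "S \<in> carrier_mat p p" "X - Y + S = 0\<^sub>m p p"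
  shows "X = Y - S"
proof (rule eq_matI)
  fix i j assume ij: "i < dim_row (Y - S)" "j < dim_col (Y - S)"
  hence ij': "i < p" "j < p" using assms by auto
  have "(X - Y + S) $$ (i,j) = X $$ (i,j) - Y $$ (i,j) + S $$ (i,j)" using assms(1-3) ij' by simp
  moreover have "(X - Y + S) $$ (i,j) = 0" using assms ij' by simp
  ultimately have "X $$ (i,j) = Y $$ (i,j) - S $$ (i,j)" by (simp add: algebra_simps)
  thus "X $$ (i,j) = (Y - S) $$ (i,j)" using assms(2,3) ij' by simp
qed (use assms in auto)

lemma sq_sum_zero:
  fixes X Y :: "'a :: comm_ring_1 mat"
  assumes "X \<in> carrier_mat p p" "Y \<in> carrier_mat p p" "X + Y = Z" "Z = 0\<^sub>m p p"
  shows "X - 0\<^sub>m p p + Y = 0\<^sub>m p p"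
  using assms by simp

lemma coeff_mconst_mult:
  assumes "A \<in> carrier_mat p p" "P \<in> carrier_mat p p" "i < p" "j < p"
  shows "coeff ((mconst A * P) $$ (i,j)) a = (\<Sum>r<p. A $$ (i,r) * coeff (P $$ (r,j)) a)"
  using assms by (simp add: mconst_mult_index coeff_sum del: index_mult_mat)

lemma coeff_msum:
  assumes "i < p" "j < p"
  shows "coeff (msum p f K $$ (i,j)) a = (\<Sum>k\<in>K. coeff (f k $$ (i,j)) a)"
  using assms by (simp add: coeff_sum)

lemma coeff_P1: "i < p \<Longrightarrow> j < p \<Longrightarrow> coeff (P1 p W n $$ (i,j)) a = (if a \<le> n then S1 p W n a $$ (i,j) else 0)"
  unfolding P1_def by (rule coeff_mpoly_of)
lemma coeff_P2: "i < p \<Longrightarrow> j < p \<Longrightarrow> coeff (P2 p W n $$ (i,j)) a = (if a \<le> n then S2 p W n a $$ (i,j) else 0)"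
  unfolding P2_def by (rule coeff_mpoly_of)

lemma transpose_Kprev_zy:
  assumes Hc: "\<And>k. minv (Hn p u k) \<in> carrier_mat p p"
  shows "transpose_mat (Kprev_zy p u n z) =
     msum p (\<lambda>k. mconst (transpose_mat (minv (Hn p u k) * meval (P1 p u k) z)) * P2 p u k) {..<n}"
  unfolding Kprev_zy_def
proof (subst transpose_msum)
  show "transpose_mat (P2 p u k) * mconst (minv (Hn p u k) * meval (P1 p u k) z) \<in> carrier_mat p p" for k
    using Hc[of k] by (intro mult_carrier_mat[of _ p p]) auto
  show "msum p (\<lambda>k. transpose_mat (transpose_mat (P2 p u k) * mconst (minv (Hn p u k) * meval (P1 p u k) z))) {..<n} =
    msum p (\<lambda>k. mconst (transpose_mat (minv (Hn p u k) * meval (P1 p u k) z)) * P2 p u k) {..<n}"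
  proof (rule msum_cong)
    fix k
    have c: "mconst (minv (Hn p u k) * meval (P1 p u k) z) \<in> carrier_mat p p" using Hc[of k] by auto
    show "transpose_mat (transpose_mat (P2 p u k) * mconst (minv (Hn p u k) * meval (P1 p u k) z)) =
       mconst (transpose_mat (minv (Hn p u k) * meval (P1 p u k) z)) * P2 p u k"
      by (subst transpose_mult[of _ p p _ p]) (use c in \<open>auto simp: transpose_mconst\<close>)
  qed
qed

theorem mainTheorem3:
  fixes p :: nat and u v :: "kernel mat"
  assumes "p \<ge> 1"
    and "u \<in> carrier_mat p p" and "v \<in> carrier_mat p p"
    and "quasidefinite p u"
    and "quasidefinite p (kadd p u v)"
  shows "\<forall>n z.
     meval (P1 p (kadd p u v) n) z
       = meval (P1 p u n) z - mform p v (P1 p (kadd p u v) n) (transpose_mat (Kprev_zy p u n z))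
   \<and> transpose_mat (meval (P2 p (kadd p u v) n) z)
       = transpose_mat (meval (P2 p u n) z) - mform p v (Kprev_xz p u n z) (P2 p (kadd p u v) n)
   \<and> Hn p (kadd p u v) n = Hn p u n + mform p v (P1 p (kadd p u v) n) (P2 p u n)
   \<and> Hn p (kadd p u v) n = Hn p u n + mform p v (P1 p u n) (P2 p (kadd p u v) n)"
proof (intro allI)
  fix n z
  have p: "0 < p" using assms(1) by simp
  define w where "w = kadd p u v"
  have qu: "quasidefinite p u" by (rule assms(4))
  have qw: "quasidefinite p w" unfolding w_def by (rule assms(5))
  note gu = gf_props[OF gf_main[OF qu p]]
  note gw = gf_props[OF gf_main[OF qw p]]
  have Hc: "minv (Hn p u k) \<in> carrier_mat p p" for k using H_inv[OF qu p] by blast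
  have Hl: "minv (Hn p u k) * Hn p u k = 1\<^sub>m p" for k using H_inv[OF qu p] by blast
  have Hr: "Hn p u k * minv (Hn p u k) = 1\<^sub>m p" for k using H_inv[OF qu p] by blast
  have Huc: "Hn p u k \<in> carrier_mat p p" for k by (rule gu(3))
  have formw: "mform p w P Q = mform p u P Q + mform p v P Q" for P Q
    unfolding w_def by (rule mform_kadd)
  define Ph where "Ph = P1 p w n"
  define Qh where "Qh = P2 p w n"
  define Cm where "Cm k = mform p v Ph (P2 p u k) * minv (Hn p u k)" for k
  have Cmc: "Cm k \<in> carrier_mat p p" for k using Hc by (simp add: Cm_def)
  define SS where "SS = msum p (\<lambda>k. mconst (Cm k) * P1 p u k) {..<n}"
  define Cp where "Cp k = transpose_mat (minv (Hn p u k) * mform p v (P1 p u k) Qh)" for k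
  have Cpc: "Cp k \<in> carrier_mat p p" for k using Hc by (simp add: Cp_def)
  define TT where "TT = msum p (\<lambda>k. mconst (Cp k) * P2 p u k) {..<n}"
  have Phc: "Ph \<in> carrier_mat p p" "Qh \<in> carrier_mat p p" "SS \<in> carrier_mat p p" "TT \<in> carrier_mat p p"
    by (simp_all add: Ph_def Qh_def SS_def TT_def)

  have D0: "Ph - P1 p u n + SS = 0\<^sub>m p p"
  proof (rule K4[OF qu p])
    show "Ph - P1 p u n + SS \<in> carrier_mat p p" using Phc by simp
  next
    fix i j a assume ij: "i < p" "j < p" and a: "n \<le> a"
    have s: "coeff (SS $$ (i,j)) a = 0"
    proof -
      have "coeff (SS $$ (i,j)) a = (\<Sum>k<n. coeff ((mconst (Cm k) * P1 p u k) $$ (i,j)) a)"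
        unfolding SS_def by (rule coeff_msum[OF ij])
      also have "\<dots> = (\<Sum>k<n. \<Sum>r<p. Cm k $$ (i,r) * coeff (P1 p u k $$ (r,j)) a)"
        by (intro sum.cong refl) (rule coeff_mconst_mult[OF Cmc P1_carrier ij])
      also have "\<dots> = 0" using a ij by (auto intro!: sum.neutral simp: coeff_P1)
      finally show ?thesis .
    qed
    have "coeff ((Ph - P1 p u n + SS) $$ (i,j)) a = coeff (Ph $$ (i,j)) a - coeff (P1 p u n $$ (i,j)) a + coeff (SS $$ (i,j)) a"
      using ij Phc by simp
    also have "\<dots> = 0" using s ij a gu(4) gw(4) by (simp add: Ph_def coeff_P1)
    finally show "coeff ((Ph - P1 p u n + SS) $$ (i,j)) a = 0" .
  next
    fix k assume k: "k < n"
    have a1: "mform p u (P1 p u n) (P2 p u k) = 0\<^sub>m p p" using K1[OF qu p, of n k] k by simp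
    have a2: "mform p u SS (P2 p u k) = mform p v Ph (P2 p u k)"
    proof -
      have "mform p u SS (P2 p u k) = msum p (\<lambda>m. Cm m * mform p u (P1 p u m) (P2 p u k)) {..<n}"
        unfolding SS_def mform_msum_left using Cmc by (intro msum_cong mform_mconst_left) auto
      also have "\<dots> = msum p (\<lambda>m. Cm m * (if m = k then Hn p u m else 0\<^sub>m p p)) {..<n}"
        by (intro msum_cong) (simp add: K1[OF qu p])
      also have "\<dots> = Cm k * Hn p u k"
        using k Cmc Huc by (subst msum_single[where k=k]) auto
      also have "\<dots> = mform p v Ph (P2 p u k) * (minv (Hn p u k) * Hn p u k)"
        unfolding Cm_def using Hc Huc by (simp add: assoc_mult_mat[of _ p p _ p _ p])
      also have "\<dots> = mform p v Ph (P2 p u k)" by (simp add: Hl)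
      finally show ?thesis .
    qed
    have a3: "mform p u Ph (P2 p u k) + mform p v Ph (P2 p u k) = 0\<^sub>m p p"
    proof -
      have "mform p w Ph (P2 p u k) = 0\<^sub>m p p"
        unfolding Ph_def P2_def using k gu(2) by (intro K2[OF qw p]) auto
      thus ?thesis by (simp add: formw)
    qed
    show "mform p u (Ph - P1 p u n + SS) (P2 p u k) = 0\<^sub>m p p"
      using Phc a1 a2 a3 by (simp add: mform_add_left mform_diff_left)
  qed
  have PhE: "Ph = P1 p u n - SS" using sq_solve[OF Phc(1) P1_carrier Phc(3) D0] .

  have E0: "Qh - P2 p u n + TT = 0\<^sub>m p p"
  proof (rule K5[OF qu p])
    show "Qh - P2 p u n + TT \<in> carrier_mat p p" using Phc by simp
  next
    fix i j a assume ij: "i < p" "j < p" and a: "n \<le> a"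
    have s: "coeff (TT $$ (i,j)) a = 0"
    proof -
      have "coeff (TT $$ (i,j)) a = (\<Sum>k<n. coeff ((mconst (Cp k) * P2 p u k) $$ (i,j)) a)"
        unfolding TT_def by (rule coeff_msum[OF ij])
      also have "\<dots> = (\<Sum>k<n. \<Sum>r<p. Cp k $$ (i,r) * coeff (P2 p u k $$ (r,j)) a)"
        by (intro sum.cong refl) (rule coeff_mconst_mult[OF Cpc P2_carrier ij])
      also have "\<dots> = 0" using a ij by (auto intro!: sum.neutral simp: coeff_P2)
      finally show ?thesis .
    qed
    have "coeff ((Qh - P2 p u n + TT) $$ (i,j)) a = coeff (Qh $$ (i,j)) a - coeff (P2 p u n $$ (i,j)) a + coeff (TT $$ (i,j)) a"
      using ij Phc by simp
    also have "\<dots> = 0" using s ij a gu(5) gw(5) by (simp add: Qh_def coeff_P2)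
    finally show "coeff ((Qh - P2 p u n + TT) $$ (i,j)) a = 0" .
  next
    fix k assume k: "k < n"
    have a1: "mform p u (P1 p u k) (P2 p u n) = 0\<^sub>m p p" using K1[OF qu p, of k n] k by simp
    have a2: "mform p u (P1 p u k) TT = mform p v (P1 p u k) Qh"
    proof -
      have "mform p u (P1 p u k) TT = msum p (\<lambda>m. mform p u (P1 p u k) (P2 p u m) * transpose_mat (Cp m)) {..<n}"
        unfolding TT_def mform_msum_right using Cpc by (intro msum_cong mform_mconst_right) auto
      also have "\<dots> = msum p (\<lambda>m. (if k = m then Hn p u k else 0\<^sub>m p p) * transpose_mat (Cp m)) {..<n}"
        by (intro msum_cong) (simp add: K1[OF qu p])
      also have "\<dots> = Hn p u k * transpose_mat (Cp k)"
        using k Cpc Huc by (subst msum_single[where k=k]) auto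
      also have "\<dots> = (Hn p u k * minv (Hn p u k)) * mform p v (P1 p u k) Qh"
        unfolding Cp_def using Hc Huc by (simp add: assoc_mult_mat[of _ p p _ p _ p])
      also have "\<dots> = mform p v (P1 p u k) Qh" by (simp add: Hr)
      finally show ?thesis .
    qed
    have a3: "mform p u (P1 p u k) Qh + mform p v (P1 p u k) Qh = 0\<^sub>m p p"
    proof -
      have "mform p w (P1 p u k) Qh = 0\<^sub>m p p"
        unfolding Qh_def P1_def using k gu(1) by (intro K3[OF qw p]) auto
      thus ?thesis by (simp add: formw)
    qed
    show "mform p u (P1 p u k) (Qh - P2 p u n + TT) = 0\<^sub>m p p"
      using Phc a1 a2 a3 by (simp add: mform_add_right mform_diff_right)
  qed
  have QhE: "Qh = P2 p u n - TT" using sq_solve[OF Phc(2) P2_carrier Phc(4) E0] .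

  have I1: "meval Ph z = meval (P1 p u n) z - mform p v Ph (transpose_mat (Kprev_zy p u n z))"
  proof -
    have m1: "meval SS z = msum p (\<lambda>k. Cm k * meval (P1 p u k) z) {..<n}"
      unfolding SS_def using Cmc by (subst meval_msum[where p=p]) (auto intro!: msum_cong meval_mconst_mult)
    have m2: "mform p v Ph (transpose_mat (Kprev_zy p u n z)) = msum p (\<lambda>k. Cm k * meval (P1 p u k) z) {..<n}"
      unfolding transpose_Kprev_zy[OF Hc] mform_msum_right
    proof (rule msum_cong)
      fix k
      have "mform p v Ph (mconst (transpose_mat (minv (Hn p u k) * meval (P1 p u k) z)) * P2 p u k)
          = mform p v Ph (P2 p u k) * (minv (Hn p u k) * meval (P1 p u k) z)"
        using Hc[of k] by (subst mform_mconst_right) auto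
      also have "\<dots> = Cm k * meval (P1 p u k) z"
        unfolding Cm_def using Hc[of k] by (simp add: assoc_mult_mat[of _ p p _ p _ p])
      finally show "mform p v Ph (mconst (transpose_mat (minv (Hn p u k) * meval (P1 p u k) z)) * P2 p u k)
          = Cm k * meval (P1 p u k) z" .
    qed
    have "meval Ph z = meval (P1 p u n) z - meval SS z"
      unfolding PhE using Phc by (intro meval_diff) auto
    thus ?thesis using m1 m2 by simp
  qed
  have I2: "transpose_mat (meval Qh z) = transpose_mat (meval (P2 p u n) z) - mform p v (Kprev_xz p u n z) Qh"
  proof -
    have m1: "meval TT z = msum p (\<lambda>k. Cp k * meval (P2 p u k) z) {..<n}"
      unfolding TT_def using Cpc by (subst meval_msum[where p=p]) (auto intro!: msum_cong meval_mconst_mult)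
    have m1': "transpose_mat (meval TT z) = msum p (\<lambda>k. transpose_mat (meval (P2 p u k) z) * (minv (Hn p u k) * mform p v (P1 p u k) Qh)) {..<n}"
      unfolding m1 using Cpc
      by (subst transpose_msum[where p=p]) (auto intro!: msum_cong simp: transpose_mult[of _ p p _ p] Cp_def)
    have m2: "mform p v (Kprev_xz p u n z) Qh = msum p (\<lambda>k. transpose_mat (meval (P2 p u k) z) * (minv (Hn p u k) * mform p v (P1 p u k) Qh)) {..<n}"
      unfolding Kprev_xz_def mform_msum_left
    proof (rule msum_cong)
      fix k
      have "mform p v (mconst (transpose_mat (meval (P2 p u k) z) * minv (Hn p u k)) * P1 p u k) Qh
          = (transpose_mat (meval (P2 p u k) z) * minv (Hn p u k)) * mform p v (P1 p u k) Qh"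
        using Hc[of k] by (subst mform_mconst_left) auto
      also have "\<dots> = transpose_mat (meval (P2 p u k) z) * (minv (Hn p u k) * mform p v (P1 p u k) Qh)"
        using Hc[of k] by (simp add: assoc_mult_mat[of _ p p _ p _ p])
      finally show "mform p v (mconst (transpose_mat (meval (P2 p u k) z) * minv (Hn p u k)) * P1 p u k) Qh
          = transpose_mat (meval (P2 p u k) z) * (minv (Hn p u k) * mform p v (P1 p u k) Qh)" .
    qed
    have "meval Qh z = meval (P2 p u n) z - meval TT z"
      unfolding QhE using Phc by (intro meval_diff) auto
    hence "transpose_mat (meval Qh z) = transpose_mat (meval (P2 p u n) z) - transpose_mat (meval TT z)"
      using Phc by (simp add: transpose_minus[of _ p p])
    thus ?thesis using m1' m2 by simp
  qed
  have SSz: "mform p u SS (P2 p u n) = 0\<^sub>m p p"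
  proof -
    have "mform p u SS (P2 p u n) = msum p (\<lambda>m. Cm m * mform p u (P1 p u m) (P2 p u n)) {..<n}"
      unfolding SS_def mform_msum_left using Cmc by (intro msum_cong mform_mconst_left) auto
    also have "\<dots> = 0\<^sub>m p p" using Cmc by (intro msum_zero) (simp add: K1[OF qu p])
    finally show ?thesis .
  qed
  have TTz: "mform p u (P1 p u n) TT = 0\<^sub>m p p"
  proof -
    have "mform p u (P1 p u n) TT = msum p (\<lambda>m. mform p u (P1 p u n) (P2 p u m) * transpose_mat (Cp m)) {..<n}"
      unfolding TT_def mform_msum_right using Cpc by (intro msum_cong mform_mconst_right) auto
    also have "\<dots> = 0\<^sub>m p p" using Cpc by (intro msum_zero) (simp add: K1[OF qu p])
    finally show ?thesis .
  qed
  have Hw: "Hn p w n = mform p w Ph Qh" using K1[OF qw p, of n n] by (simp add: Ph_def Qh_def)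
  have I3: "Hn p w n = Hn p u n + mform p v Ph (P2 p u n)"
  proof -
    have wT: "mform p w Ph TT = 0\<^sub>m p p"
    proof -
      have "mform p w Ph TT = msum p (\<lambda>m. mform p w Ph (P2 p u m) * transpose_mat (Cp m)) {..<n}"
        unfolding TT_def mform_msum_right using Cpc by (intro msum_cong mform_mconst_right) auto
      also have "\<dots> = 0\<^sub>m p p" using Cpc gu(2)
        by (intro msum_zero) (simp add: Ph_def P2_def K2[OF qw p])
      finally show ?thesis .
    qed
    have "mform p w Ph Qh = mform p w Ph (P2 p u n) - mform p w Ph TT"
      unfolding QhE using Phc by (intro mform_diff_right) auto
    also have "\<dots> = mform p u Ph (P2 p u n) + mform p v Ph (P2 p u n)" using wT by (simp add: formw)
    also have "mform p u Ph (P2 p u n) = mform p u (P1 p u n) (P2 p u n) - mform p u SS (P2 p u n)"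
      unfolding PhE using Phc by (intro mform_diff_left) auto
    also have "\<dots> = Hn p u n" using SSz Huc by (simp add: K1[OF qu p])
    finally show ?thesis using Hw by simp
  qed
  have I4: "Hn p w n = Hn p u n + mform p v (P1 p u n) Qh"
  proof -
    have wS: "mform p w SS Qh = 0\<^sub>m p p"
    proof -
      have "mform p w SS Qh = msum p (\<lambda>m. Cm m * mform p w (P1 p u m) Qh) {..<n}"
        unfolding SS_def mform_msum_left using Cmc by (intro msum_cong mform_mconst_left) auto
      also have "\<dots> = 0\<^sub>m p p" using Cmc gu(1)
        by (intro msum_zero) (simp add: Qh_def P1_def K3[OF qw p])
      finally show ?thesis .
    qed
    have "mform p w Ph Qh = mform p w (P1 p u n) Qh - mform p w SS Qh"
      unfolding PhE using Phc by (intro mform_diff_left) auto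
    also have "\<dots> = mform p u (P1 p u n) Qh + mform p v (P1 p u n) Qh" using wS by (simp add: formw)
    also have "mform p u (P1 p u n) Qh = mform p u (P1 p u n) (P2 p u n) - mform p u (P1 p u n) TT"
      unfolding QhE using Phc by (intro mform_diff_right) auto
    also have "\<dots> = Hn p u n" using TTz Huc by (simp add: K1[OF qu p])
    finally show ?thesis using Hw by simp
  qed
  show "meval (P1 p (kadd p u v) n) z
       = meval (P1 p u n) z - mform p v (P1 p (kadd p u v) n) (transpose_mat (Kprev_zy p u n z))
   \<and> transpose_mat (meval (P2 p (kadd p u v) n) z)
       = transpose_mat (meval (P2 p u n) z) - mform p v (Kprev_xz p u n z) (P2 p (kadd p u v) n)
   \<and> Hn p (kadd p u v) n = Hn p u n + mform p v (P1 p (kadd p u v) n) (P2 p u n)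
   \<and> Hn p (kadd p u v) n = Hn p u n + mform p v (P1 p u n) (P2 p (kadd p u v) n)"
    using I1 I2 I3 I4 unfolding Ph_def Qh_def w_def by blast
qed

end
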